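(* Let $L:\mathbb{T}^d\times\mathbb{R}^d\to\mathbb{R}$ be continuous with $\lim_{|v|\to\infty}\inf_{x\in\mathbb{T}^d}L(x,v)/|v|=+\infty$, and let $(\varphi,\overline{H})$ be a viscosity solution to $H(x,-\nabla\varphi)=\overline{H}$. Then for every $y\in\mathbb{T}^d$, \[\lim_{r\to+\infty}\inf\Big\{\frac1r\int_0^rL(x(t),v(t))\,dt:\ (x,v)\text{ a controlled process on }[0,r],\ x(0)=y\Big\}=-\overline{H}.\] Furthermore, given $\varepsilon>0$, there exists $\varkappa_0>0$ such that for every $\varkappa\in(0,\varkappa_0]$ and $y\in\mathbb{T}^d$, \[\lim_{r\to+\infty}\limsup_{d(\Delta)\downarrow0}\frac1r\int_0^rL(x_{y,\varkappa,r,\Delta}(t),v_{y,\varkappa,r,\Delta}(t))\,dt\le-\overline{H}+\varepsilon.\]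
   Context: $\mathbb{T}^d=\mathbb{R}^d/\mathbb{Z}^d$; $x+v$ is the translate of $x\in\mathbb{T}^d$ by $v\in\mathbb{R}^d$. $H(x,p)=\max_{v\in\mathbb{R}^d}[pv-L(x,v)]$. Hadamard sub/superdifferentials: $p\in\partial_D^\mp\varphi(x)$ iff for all $w$, $\liminf_{h\downarrow0,w'\to w}\frac{\varphi(x+hw')-\varphi(x)}{h}\ge pw$ (resp. $\limsup\ldots\le pw$). $(\varphi,\overline{H})$, $\varphi$ continuous, is a viscosity solution if $H(x,-p)\le\overline{H}$ for $p\in\partial_D^+\varphi(x)$ and $H(x,-p)\ge\overline{H}$ for $p\in\partial_D^-\varphi(x)$, all $x$. A controlled process on $[0,r]$ is $(x,v)$ with $v\in L^1([0,r];\mathbb{R}^d)$, $x\in C([0,r];\mathbb{T}^d)$, $x(s)=x(0)+\int_0^sv\,dt$. Feedback: $\varphi_\varkappa(x)=\inf_v\{\varphi(x+v)+\frac1{2\varkappa^2}|v|^2\}$; $b_\varkappa[x]$ a chosen minimizer, $p_\varkappa[x]=\frac1{\varkappa^2}(-b_\varkappa[x])^\top$, $\mathbbm{v}_\varkappa[x]\in\operatorname{Argmax}_v[-p_\varkappa[x]v-L(x+b_\varkappa[x],v)]$. For a partition $\Delta=\{t_i\}_{i=0}^n$ of $[0,r]$ with fineness $d(\Delta)=\max_i(t_{i+1}-t_i)$: $x_{y,\varkappa,r,\Delta}(0)=y$, and on $[t_i,t_{i+1})$, $v_{y,\varkappa,r,\Delta}(t)=\mathbbm{v}_\varkappa[x_{y,\varkappa,r,\Delta}(t_i)]$,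 $x_{y,\varkappa,r,\Delta}(t)=x_{y,\varkappa,r,\Delta}(t_i)+(t-t_i)\mathbbm{v}_\varkappa[x_{y,\varkappa,r,\Delta}(t_i)]$. *)

theory Defs
  imports "HOL-Analysis.Analysis"
begin

(* The torus T^d = R^d / Z^d is modelled through its universal cover R^d = 'a::euclidean_space
   (d = DIM('a)); functions on T^d are Z^d-periodic functions on R^d. *)

definition int_lattice :: "'a::euclidean_space set" where
  "int_lattice = {k. \<forall>b\<in>Basis. k \<bullet> b \<in> \<int>}"

definition periodic_fun :: "('a::euclidean_space \<Rightarrow> 'b) \<Rightarrow> bool" where
  "periodic_fun f \<longleftrightarrow> (\<forall>x. \<forall>k\<in>int_lattice. f (x + k) = f x)"

definition Ham :: "('a::euclidean_space \<Rightarrow> 'a \<Rightarrow> real) \<Rightarrow> 'a \<Rightarrow> 'a \<Rightarrow> real" where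
  "Ham L x p = (SUP v. p \<bullet> v - L x v)"

definition hadamard_subdiff :: "('a::euclidean_space \<Rightarrow> real) \<Rightarrow> 'a \<Rightarrow> 'a set" where
  "hadamard_subdiff \<phi> x = {p. \<forall>w.
     Liminf (at_right 0 \<times>\<^sub>F nhds w) (\<lambda>(h, w'). ereal ((\<phi> (x + h *\<^sub>R w') - \<phi> x) / h))
       \<ge> ereal (p \<bullet> w)}"

definition hadamard_superdiff :: "('a::euclidean_space \<Rightarrow> real) \<Rightarrow> 'a \<Rightarrow> 'a set" where
  "hadamard_superdiff \<phi> x = {p. \<forall>w.
     Limsup (at_right 0 \<times>\<^sub>F nhds w) (\<lambda>(h, w'). ereal ((\<phi> (x + h *\<^sub>R w') - \<phi> x) / h))
       \<le> ereal (p \<bullet> w)}"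

definition viscosity_solution ::
  "('a::euclidean_space \<Rightarrow> 'a \<Rightarrow> real) \<Rightarrow> ('a \<Rightarrow> real) \<Rightarrow> real \<Rightarrow> bool" where
  "viscosity_solution L \<phi> Hbar \<longleftrightarrow>
     continuous_on UNIV \<phi> \<and> periodic_fun \<phi> \<and>
     (\<forall>x. \<forall>p\<in>hadamard_superdiff \<phi> x. Ham L x (- p) \<le> Hbar) \<and>
     (\<forall>x. \<forall>p\<in>hadamard_subdiff \<phi> x. Ham L x (- p) \<ge> Hbar)"

definition controlled_process ::
  "real \<Rightarrow> 'a::euclidean_space \<Rightarrow> (real \<Rightarrow> 'a) \<Rightarrow> (real \<Rightarrow> 'a) \<Rightarrow> bool" where
  "controlled_process r y x v \<longleftrightarrow>
     set_integrable lborel {0..r} v \<and>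
     (\<forall>s\<in>{0..r}. x s = y + (LINT t:{0..s}|lborel. v t))"

(* cost int_0^r L(x,v) dt; since L is bounded below, a non-integrable integrand has cost +infinity *)
definition cost :: "('a::euclidean_space \<Rightarrow> 'a \<Rightarrow> real) \<Rightarrow> real \<Rightarrow> (real \<Rightarrow> 'a) \<Rightarrow> (real \<Rightarrow> 'a) \<Rightarrow> ereal" where
  "cost L r x v =
     (if set_integrable lborel {0..r} (\<lambda>t. L (x t) (v t))
      then ereal (LINT t:{0..r}|lborel. L (x t) (v t)) else \<infinity>)"

definition avg_value :: "('a::euclidean_space \<Rightarrow> 'a \<Rightarrow> real) \<Rightarrow> real \<Rightarrow> 'a \<Rightarrow> ereal" where
  "avg_value L r y =
     (INF xv\<in>{(x, v). controlled_process r y x v}. cost L r (fst xv) (snd xv)) / ereal r"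

definition is_partition :: "real \<Rightarrow> nat \<times> (nat \<Rightarrow> real) \<Rightarrow> bool" where
  "is_partition r P \<longleftrightarrow> (case P of (n, t) \<Rightarrow>
     0 < n \<and> t 0 = 0 \<and> t n = r \<and> (\<forall>i<n. t i < t (Suc i)))"

definition fineness :: "nat \<times> (nat \<Rightarrow> real) \<Rightarrow> real" where
  "fineness P = (case P of (n, t) \<Rightarrow> Max ((\<lambda>i. t (Suc i) - t i) ` {..<n}))"

fun fb_node :: "('a::real_vector \<Rightarrow> 'a) \<Rightarrow> 'a \<Rightarrow> (nat \<Rightarrow> real) \<Rightarrow> nat \<Rightarrow> 'a" where
  "fb_node V y t 0 = y"
| "fb_node V y t (Suc i) = fb_node V y t i + (t (Suc i) - t i) *\<^sub>R V (fb_node V y t i)"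

definition seg_index :: "nat \<times> (nat \<Rightarrow> real) \<Rightarrow> real \<Rightarrow> nat" where
  "seg_index P s = (case P of (n, t) \<Rightarrow> (THE i. i < n \<and> t i \<le> s \<and> s < t (Suc i)))"

definition fb_v :: "('a::real_vector \<Rightarrow> 'a) \<Rightarrow> 'a \<Rightarrow> nat \<times> (nat \<Rightarrow> real) \<Rightarrow> real \<Rightarrow> 'a" where
  "fb_v V y P s = V (fb_node V y (snd P) (seg_index P s))"

definition fb_x :: "('a::real_vector \<Rightarrow> 'a) \<Rightarrow> 'a \<Rightarrow> nat \<times> (nat \<Rightarrow> real) \<Rightarrow> real \<Rightarrow> 'a" where
  "fb_x V y P s = (let i = seg_index P s in
     fb_node V y (snd P) i + (s - snd P i) *\<^sub>R V (fb_node V y (snd P) i))"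

definition fb_avg_cost ::
  "('a::euclidean_space \<Rightarrow> 'a \<Rightarrow> real) \<Rightarrow> ('a \<Rightarrow> 'a) \<Rightarrow> 'a \<Rightarrow> real \<Rightarrow> nat \<times> (nat \<Rightarrow> real) \<Rightarrow> real" where
  "fb_avg_cost L V y r P = (LINT s:{0..r}|lborel. L (fb_x V y P s) (fb_v V y P s)) / r"

definition limsup_fine :: "real \<Rightarrow> (nat \<times> (nat \<Rightarrow> real) \<Rightarrow> real) \<Rightarrow> ereal" where
  "limsup_fine r F =
     (INF \<delta>\<in>{0<..}. SUP P\<in>{P. is_partition r P \<and> fineness P < \<delta>}. ereal (F P))"

end

theory Submission
  imports Defs
begin


lemma lattice_reduce:
  fixes z :: "'a::euclidean_space"
  shows "\<exists>k\<in>int_lattice. z - k \<in> cbox 0 One"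
proof -
  define k where "k = (\<Sum>b\<in>Basis. of_int \<lfloor>z \<bullet> b\<rfloor> *\<^sub>R (b::'a))"
  have kb: "k \<bullet> b = of_int \<lfloor>z \<bullet> b\<rfloor>" if "b \<in> Basis" for b
    using that unfolding k_def by (simp add: inner_sum_left inner_Basis if_distrib cong: if_cong)
  have "k \<in> int_lattice" unfolding int_lattice_def using kb by auto
  moreover have "z - k \<in> cbox 0 One"
    unfolding mem_box using kb by (auto simp: inner_diff_left) linarith+
  ultimately show ?thesis by blast
qed

lemma periodic_shift:
  assumes "periodic_fun f" "k \<in> int_lattice"
  shows "f z = f (z - k)"
  using assms unfolding periodic_fun_def by (metis diff_add_cancel)



lemma L_bound:
  fixes L :: "'a::euclidean_space \<Rightarrow> 'a \<Rightarrow> real"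
  assumes contL: "continuous_on UNIV (\<lambda>(x, v). L x v)"
    and perL: "\<And>v. periodic_fun (\<lambda>x. L x v)"
    and S: "compact S"
  shows "\<exists>C. \<forall>z::'a. \<forall>u\<in>S. \<bar>L z u\<bar> \<le> C"
proof -
  have "compact ((\<lambda>(x, v). L x v) ` (cbox 0 One \<times> S))"
    by (rule compact_continuous_image) (auto intro: continuous_on_subset[OF contL] compact_Times S)
  then obtain C where C: "\<And>y. y \<in> (\<lambda>(x, v). L x v) ` (cbox 0 One \<times> S) \<Longrightarrow> \<bar>y\<bar> \<le> C"
    using compact_imp_bounded bounded_real by metis
  show ?thesis
  proof (intro exI allI ballI)
    fix z :: 'a and u assume u: "u \<in> S"
    obtain k where k: "k \<in> int_lattice" "z - k \<in> cbox 0 One" using lattice_reduce by blast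
    have "L z u = L (z - k) u" using periodic_shift[OF perL k(1)] by blast
    also have "\<bar>\<dots>\<bar> \<le> C" using C[of "L (z - k) u"] k u by force
    finally show "\<bar>L z u\<bar> \<le> C" .
  qed
qed

lemma phi_bound:
  fixes \<phi> :: "'a::euclidean_space \<Rightarrow> real"
  assumes "continuous_on UNIV \<phi>" "periodic_fun \<phi>"
  shows "\<exists>M. \<forall>z::'a. \<bar>\<phi> z\<bar> \<le> M"
proof -
  have "compact (\<phi> ` cbox 0 One)"
    by (rule compact_continuous_image) (auto intro: continuous_on_subset[OF assms(1)])
  then obtain C where C: "\<And>y. y \<in> \<phi> ` cbox 0 One \<Longrightarrow> \<bar>y\<bar> \<le> C"
    using compact_imp_bounded bounded_real by metis
  show ?thesis
  proof (intro exI allI)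
    fix z :: 'a
    obtain k where k: "k \<in> int_lattice" "z - k \<in> cbox 0 One" using lattice_reduce by blast
    have "\<phi> z = \<phi> (z - k)" using periodic_shift[OF assms(2) k(1)] by blast
    then show "\<bar>\<phi> z\<bar> \<le> C" using C k by auto
  qed
qed

lemma L_unif:
  fixes L :: "'a::euclidean_space \<Rightarrow> 'a \<Rightarrow> real"
  assumes contL: "continuous_on UNIV (\<lambda>(x, v). L x v)"
    and perL: "\<And>v. periodic_fun (\<lambda>x. L x v)"
    and eta: "\<eta> > 0"
  shows "\<exists>\<delta>>0. \<forall>z z' u. norm u \<le> V \<longrightarrow> dist z z' < \<delta> \<longrightarrow> \<bar>L z u - L z' u\<bar> < \<eta>"
proof -
  obtain B where B: "\<And>x. x \<in> cbox (0::'a) One \<Longrightarrow> norm x \<le> B"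
    using bounded_cbox bounded_iff by metis
  let ?S = "cball (0::'a) (B + 1) \<times> cball (0::'a) V"
  have "uniformly_continuous_on ?S (\<lambda>(x, v). L x v)"
    by (rule compact_uniformly_continuous) (auto intro: continuous_on_subset[OF contL] compact_Times)
  then obtain d where d: "d > 0"
    "\<And>p q. p \<in> ?S \<Longrightarrow> q \<in> ?S \<Longrightarrow> dist q p < d \<Longrightarrow> dist ((\<lambda>(x, v). L x v) q) ((\<lambda>(x, v). L x v) p) < \<eta>"
    unfolding uniformly_continuous_on_def using eta by metis
  show ?thesis
  proof (intro exI[of _ "min d 1"] conjI allI impI)
    fix z z' u :: 'a assume u: "norm u \<le> V" and dz: "dist z z' < min d 1"
    obtain k where k: "k \<in> int_lattice" "z - k \<in> cbox 0 One" using lattice_reduce by blast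
    have e1: "L z u = L (z - k) u" "L z' u = L (z' - k) u"
      using periodic_shift[OF perL k(1)] by blast+
    have n1: "norm (z - k) \<le> B" using B k by blast
    have dd: "dist (z - k) (z' - k) = dist z z'" by (simp add: dist_norm algebra_simps)
    have n2: "norm (z' - k) \<le> B + 1"
      using n1 dd dz norm_triangle_ineq[of "z - k" "z' - z"] by (auto simp: dist_norm norm_minus_commute algebra_simps)
    have "dist (L (z' - k) u) (L (z - k) u) < \<eta>"
      using d(2)[of "(z - k, u)" "(z' - k, u)"] n1 n2 u dd dz
      by (auto simp: dist_Pair_Pair dist_commute)
    then show "\<bar>L z u - L z' u\<bar> < \<eta>" using e1 by (simp add: dist_real_def abs_minus_commute)
  qed (use d in auto)
qed

lemma L_superlin:
  fixes L :: "'a::euclidean_space \<Rightarrow> 'a \<Rightarrow> real"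
  assumes contL: "continuous_on UNIV (\<lambda>(x, v). L x v)"
    and perL: "\<And>v. periodic_fun (\<lambda>x. L x v)"
    and superlin: "filterlim (\<lambda>v. INF x. L x v / norm v) at_top at_infinity"
  shows "\<exists>R\<ge>1. \<forall>z u. norm u \<ge> R \<longrightarrow> L z u \<ge> K * norm u"
proof -
  have "eventually (\<lambda>v. K \<le> (INF x. L x v / norm v)) at_infinity"
    using superlin unfolding filterlim_at_top by blast
  then obtain b where b: "\<And>v. b \<le> norm v \<Longrightarrow> K \<le> (INF x. L x v / norm v)"
    unfolding eventually_at_infinity by blast
  show ?thesis
  proof (intro exI[of _ "max b 1"] conjI allI impI)
    fix z u :: 'a assume u: "max b 1 \<le> norm u"
    obtain C where C: "\<And>z. \<bar>L z u\<bar> \<le> C"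
      using L_bound[OF contL perL, of "{u}"] by auto
    have bdd: "bdd_below (range (\<lambda>x. L x u / norm u))"
    proof (rule bdd_belowI)
      fix y assume "y \<in> range (\<lambda>x. L x u / norm u)"
      then obtain x where "y = L x u / norm u" by blast
      moreover have "- C \<le> L x u" using C[of x] by linarith
      ultimately show "- C / norm u \<le> y" using u divide_right_mono[of "- C" "L x u" "norm u"] by simp
    qed
    have "K \<le> L z u / norm u" using b[of u] u cINF_lower[OF bdd, of z] by auto
    moreover have "norm u > 0" using u by linarith
    ultimately show "K * norm u \<le> L z u" by (simp add: pos_le_divide_eq)
  qed auto
qed



lemma prod_filter_facts:
  fixes w :: "'a::real_normed_vector"
  defines "F \<equiv> at_right (0::real) \<times>\<^sub>F nhds w"
  shows "((\<lambda>x. fst x) \<longlongrightarrow> 0) F" "((\<lambda>x. snd x) \<longlongrightarrow> w) F" "eventually (\<lambda>x. fst x > 0) F"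
proof -
  have f: "filterlim fst (at_right 0) F" unfolding F_def by (rule filterlim_fst)
  then show "((\<lambda>x. fst x) \<longlongrightarrow> 0) F"
    using filterlim_mono[OF f at_within_le_nhds order_refl] by simp
  show "((\<lambda>x. snd x) \<longlongrightarrow> w) F" unfolding F_def by (rule filterlim_snd)
  have "eventually (\<lambda>h::real. h > 0) (at_right 0)" by (simp add: eventually_at_right_less)
  then show "eventually (\<lambda>x. fst x > 0) F" using f unfolding filterlim_iff by blast
qed

lemma sub_quad:
  fixes \<phi> :: "'a::euclidean_space \<Rightarrow> real"
  assumes "\<And>w. \<phi> z + p \<bullet> w - c * (norm w)\<^sup>2 \<le> \<phi> (z + w)"
  shows "p \<in> hadamard_subdiff \<phi> z"
  unfolding hadamard_subdiff_def
proof (intro CollectI allI le_Liminf_iff[THEN iffD2] allI impI)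
  fix w :: 'a and y :: ereal assume y: "y < ereal (p \<bullet> w)"
  define F where "F = at_right (0::real) \<times>\<^sub>F nhds w"
  note pf = prod_filter_facts[of w, folded F_def]
  have "((\<lambda>x. p \<bullet> snd x - c * fst x * (norm (snd x))\<^sup>2) \<longlongrightarrow> p \<bullet> w - c * 0 * (norm w)\<^sup>2) F"
    by (intro tendsto_intros pf)
  then have "((\<lambda>x. ereal (p \<bullet> snd x - c * fst x * (norm (snd x))\<^sup>2)) \<longlongrightarrow> ereal (p \<bullet> w)) F"
    by (intro tendsto_ereal) simp
  from order_tendstoD(1)[OF this y]
  have ev: "eventually (\<lambda>x. y < ereal (p \<bullet> snd x - c * fst x * (norm (snd x))\<^sup>2)) F" .
  show "eventually (\<lambda>x. y < (\<lambda>(h, w'). ereal ((\<phi> (z + h *\<^sub>R w') - \<phi> z) / h)) x) F"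
    using ev pf(3)
  proof eventually_elim
    case (elim x)
    obtain h w' where x: "x = (h, w')" by fastforce
    have h: "h > 0" using elim x by simp
    have "\<phi> z + p \<bullet> (h *\<^sub>R w') - c * (norm (h *\<^sub>R w'))\<^sup>2 \<le> \<phi> (z + h *\<^sub>R w')" by (rule assms)
    then have "h * (p \<bullet> w' - c * h * (norm w')\<^sup>2) \<le> \<phi> (z + h *\<^sub>R w') - \<phi> z"
      using h by (simp add: power2_eq_square algebra_simps)
    then have "p \<bullet> w' - c * h * (norm w')\<^sup>2 \<le> (\<phi> (z + h *\<^sub>R w') - \<phi> z) / h"
      using h by (simp add: pos_le_divide_eq mult.commute)
    then have "ereal (p \<bullet> w' - c * h * (norm w')\<^sup>2) \<le> ereal ((\<phi> (z + h *\<^sub>R w') - \<phi> z) / h)" by simp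
    from less_le_trans[OF _ this] show ?case using elim(1) x by simp
  qed
qed

lemma super_quad:
  fixes \<phi> :: "'a::euclidean_space \<Rightarrow> real"
  assumes "\<And>w. \<phi> (z + w) \<le> \<phi> z + p \<bullet> w + c * (norm w)\<^sup>2"
  shows "p \<in> hadamard_superdiff \<phi> z"
  unfolding hadamard_superdiff_def
proof (intro CollectI allI Limsup_le_iff[THEN iffD2] allI impI)
  fix w :: 'a and y :: ereal assume y: "y > ereal (p \<bullet> w)"
  define F where "F = at_right (0::real) \<times>\<^sub>F nhds w"
  note pf = prod_filter_facts[of w, folded F_def]
  have "((\<lambda>x. p \<bullet> snd x + c * fst x * (norm (snd x))\<^sup>2) \<longlongrightarrow> p \<bullet> w + c * 0 * (norm w)\<^sup>2) F"
    by (intro tendsto_intros pf)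
  then have "((\<lambda>x. ereal (p \<bullet> snd x + c * fst x * (norm (snd x))\<^sup>2)) \<longlongrightarrow> ereal (p \<bullet> w)) F"
    by (intro tendsto_ereal) simp
  from order_tendstoD(2)[OF this y]
  have ev: "eventually (\<lambda>x. ereal (p \<bullet> snd x + c * fst x * (norm (snd x))\<^sup>2) < y) F" .
  show "eventually (\<lambda>x. y > (\<lambda>(h, w'). ereal ((\<phi> (z + h *\<^sub>R w') - \<phi> z) / h)) x) F"
    using ev pf(3)
  proof eventually_elim
    case (elim x)
    obtain h w' where x: "x = (h, w')" by fastforce
    have h: "h > 0" using elim x by simp
    have "\<phi> (z + h *\<^sub>R w') \<le> \<phi> z + p \<bullet> (h *\<^sub>R w') + c * (norm (h *\<^sub>R w'))\<^sup>2" by (rule assms)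
    then have "\<phi> (z + h *\<^sub>R w') - \<phi> z \<le> h * (p \<bullet> w' + c * h * (norm w')\<^sup>2)"
      using h by (simp add: power2_eq_square algebra_simps)
    then have "(\<phi> (z + h *\<^sub>R w') - \<phi> z) / h \<le> p \<bullet> w' + c * h * (norm w')\<^sup>2"
      using h by (simp add: pos_divide_le_eq mult.commute)
    then have "ereal ((\<phi> (z + h *\<^sub>R w') - \<phi> z) / h) \<le> ereal (p \<bullet> w' + c * h * (norm w')\<^sup>2)" by simp
    from le_less_trans[OF this] show ?case using elim(1) x by simp
  qed
qed

lemma Ham_bdd:
  fixes L :: "'a::euclidean_space \<Rightarrow> 'a \<Rightarrow> real"
  assumes contL: "continuous_on UNIV (\<lambda>(x, v). L x v)"
    and perL: "\<And>v. periodic_fun (\<lambda>x. L x v)"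
    and superlin: "filterlim (\<lambda>v. INF x. L x v / norm v) at_top at_infinity"
  shows "bdd_above (range (\<lambda>v. q \<bullet> v - L z v))"
proof -
  obtain R where R: "R \<ge> 1" "\<And>z u. norm u \<ge> R \<Longrightarrow> L z u \<ge> (norm q + 1) * norm u"
    using L_superlin[OF contL perL superlin, of "norm q + 1"] by blast
  obtain C where C: "\<And>z u. u \<in> cball 0 R \<Longrightarrow> \<bar>L z u\<bar> \<le> C"
    using L_bound[OF contL perL compact_cball[of 0 R]] by blast
  show ?thesis
  proof (rule bdd_aboveI2)
    fix v
    have qv: "q \<bullet> v \<le> norm q * norm v" using Cauchy_Schwarz_ineq2[of q v] by simp
    show "q \<bullet> v - L z v \<le> norm q * R + \<bar>C\<bar>"
    proof (cases "norm v \<ge> R")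
      case True
      then have "L z v \<ge> (norm q + 1) * norm v" by (rule R(2))
      moreover have "0 \<le> norm q * R" using R(1) by simp
      moreover have "(norm q + 1) * norm v = norm q * norm v + norm v" by (simp add: algebra_simps)
      ultimately show ?thesis using qv norm_ge_zero[of v] abs_ge_zero[of C] by linarith
    next
      case False
      then have "\<bar>L z v\<bar> \<le> C" using C by simp
      moreover have "norm q * norm v \<le> norm q * R" using False by (simp add: mult_left_mono)
      ultimately show ?thesis using qv by linarith
    qed
  qed
qed

lemma Ham_ge:
  fixes L :: "'a::euclidean_space \<Rightarrow> 'a \<Rightarrow> real"
  assumes contL: "continuous_on UNIV (\<lambda>(x, v). L x v)"
    and perL: "\<And>v. periodic_fun (\<lambda>x. L x v)"
    and superlin: "filterlim (\<lambda>v. INF x. L x v / norm v) at_top at_infinity"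
  shows "q \<bullet> v - L z v \<le> Ham L z q"
  unfolding Ham_def by (rule cSUP_upper[OF _ Ham_bdd[OF contL perL superlin]]) simp

lemma Ham_le:
  assumes "\<And>u. q \<bullet> u - L z u \<le> c"
  shows "Ham L z q \<le> c"
  unfolding Ham_def by (rule cSUP_least) (use assms in auto)



lemma norm_add_quad:
  fixes a w :: "'a::real_inner"
  assumes "a \<noteq> 0"
  shows "norm (a + w) \<le> norm a + (a \<bullet> w) / norm a + (norm w)\<^sup>2 / (2 * norm a)"
proof -
  define n where "n = norm a"
  have n: "n > 0" using assms by (simp add: n_def)
  define R where "R = n + (a \<bullet> w) / n + (norm w)\<^sup>2 / (2 * n)"
  have aw: "- (n * norm w) \<le> a \<bullet> w" using Cauchy_Schwarz_ineq2[of a w] n_def by simp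
  have "(a \<bullet> w) / n \<ge> - norm w" using aw n by (simp add: pos_le_divide_eq mult.commute)
  then have "R \<ge> n - norm w + (norm w)\<^sup>2 / (2 * n)" unfolding R_def by simp
  moreover have "n - norm w + (norm w)\<^sup>2 / (2 * n) = ((n - norm w)\<^sup>2 + n\<^sup>2) / (2 * n)"
    using n by (simp add: field_simps power2_eq_square)
  moreover have "((n - norm w)\<^sup>2 + n\<^sup>2) / (2 * n) \<ge> 0" using n by simp
  ultimately have R0: "R \<ge> 0" by linarith
  have sq: "(norm (a + w))\<^sup>2 = n\<^sup>2 + 2 * (a \<bullet> w) + (norm w)\<^sup>2"
    unfolding n_def by (simp add: power2_norm_eq_inner inner_add algebra_simps inner_commute)
  have "R\<^sup>2 = n\<^sup>2 + 2 * (a \<bullet> w) + (norm w)\<^sup>2 + ((a \<bullet> w) / n + (norm w)\<^sup>2 / (2 * n))\<^sup>2"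
    unfolding R_def using n by (simp add: field_simps power2_eq_square)
  then have "(norm (a + w))\<^sup>2 \<le> R\<^sup>2" using sq by simp
  then have "norm (a + w) \<le> R" using R0 by (rule power2_le_imp_le)
  then show ?thesis unfolding R_def n_def .
qed

locale setting =
  fixes L :: "'a::euclidean_space \<Rightarrow> 'a \<Rightarrow> real"
    and \<phi> :: "'a \<Rightarrow> real" and Hbar :: real
  assumes contL: "continuous_on UNIV (\<lambda>(x, v). L x v)"
    and perL: "\<And>v. periodic_fun (\<lambda>x. L x v)"
    and superlin: "filterlim (\<lambda>v. INF x. L x v / norm v) at_top at_infinity"
    and visc: "viscosity_solution L \<phi> Hbar"
begin

lemma phi_cont: "continuous_on UNIV \<phi>" and phi_per: "periodic_fun \<phi>"
  and phi_super: "\<And>x p. p \<in> hadamard_superdiff \<phi> x \<Longrightarrow> Ham L x (- p) \<le> Hbar"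
  and phi_sub: "\<And>x p. p \<in> hadamard_subdiff \<phi> x \<Longrightarrow> Ham L x (- p) \<ge> Hbar"
  using visc unfolding viscosity_solution_def by auto

lemma phi_bnd: "\<exists>M\<ge>0. \<forall>z. \<bar>\<phi> z\<bar> \<le> M"
  using phi_bound[OF phi_cont phi_per] by (metis abs_ge_zero order_trans)

lemma Hge: "q \<bullet> v - L z v \<le> Ham L z q"
  by (rule Ham_ge[OF contL perL superlin])

lemma lip: "\<exists>lc>0. \<forall>x z. \<phi> z - \<phi> x \<le> lc * norm (z - x)"
proof -
  obtain M where M: "M \<ge> 0" "\<And>z. \<bar>\<phi> z\<bar> \<le> M" using phi_bnd by blast
  obtain C1 where C1: "\<And>z u. u \<in> cball 0 1 \<Longrightarrow> \<bar>L z u\<bar> \<le> C1"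
    using L_bound[OF contL perL compact_cball[of 0 1]] by blast
  define lc where "lc = \<bar>Hbar\<bar> + \<bar>C1\<bar> + 1"
  have l0: "lc > 0" unfolding lc_def by simp
  have main: "\<phi> z - lc * norm (z - x) \<le> \<phi> x" for x z
  proof -
    define g where "g z = \<phi> z - lc * norm (z - x)" for z
    define \<rho> where "\<rho> = 2 * M / lc + 1"
    have cg: "continuous_on (cball x \<rho>) g"
      unfolding g_def by (intro continuous_intros continuous_on_subset[OF phi_cont]) auto
    have "\<rho> > 0" unfolding \<rho>_def using M l0 by (simp add: add_nonneg_pos)
    then obtain z0 where z0: "z0 \<in> cball x \<rho>" "\<And>z. z \<in> cball x \<rho> \<Longrightarrow> g z \<le> g z0"
      using continuous_attains_sup[OF compact_cball _ cg] by (metis centre_in_cball less_imp_le empty_iff)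
    have glob: "g z \<le> g z0" for z
    proof (cases "z \<in> cball x \<rho>")
      case True then show ?thesis by (rule z0)
    next
      case False
      then have "norm (z - x) > \<rho>" by (simp add: dist_norm norm_minus_commute)
      then have "lc * norm (z - x) \<ge> lc * \<rho>" using l0 by simp
      moreover have "lc * \<rho> = 2 * M + lc" unfolding \<rho>_def using l0 by (simp add: field_simps)
      ultimately have "g z \<le> - M" unfolding g_def using M(2)[of z] l0 by linarith
      also have "- M \<le> g x" unfolding g_def using M(2)[of x] by simp
      also have "g x \<le> g z0" using z0(2)[of x] \<open>\<rho> > 0\<close> by simp
      finally show ?thesis .
    qed
    have "z0 = x"
    proof (rule ccontr)
      assume ne: "z0 \<noteq> x"
      define a where "a = z0 - x"
      have a0: "a \<noteq> 0" using ne unfolding a_def by simp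
      define na where "na = norm a"
      have na: "na > 0" using a0 unfolding na_def by simp
      define q where "q = (lc / na) *\<^sub>R a"
      have "\<phi> (z0 + w) \<le> \<phi> z0 + q \<bullet> w + (lc / (2 * na)) * (norm w)\<^sup>2" for w
      proof -
        have "g (z0 + w) \<le> g z0" by (rule glob)
        then have 1: "\<phi> (z0 + w) \<le> \<phi> z0 + lc * (norm (a + w) - na)"
          unfolding g_def a_def na_def by (simp add: algebra_simps)
        have "norm (a + w) - na \<le> (a \<bullet> w) / na + (norm w)\<^sup>2 / (2 * na)"
          using norm_add_quad[OF a0, of w] unfolding na_def by simp
        then have "lc * (norm (a + w) - na) \<le> lc * ((a \<bullet> w) / na + (norm w)\<^sup>2 / (2 * na))"
          using l0 by (simp add: mult_left_mono)
        also have "\<dots> = q \<bullet> w + (lc / (2 * na)) * (norm w)\<^sup>2"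
          unfolding q_def by (simp add: field_simps)
        finally show ?thesis using 1 by linarith
      qed
      then have "q \<in> hadamard_superdiff \<phi> z0" by (intro super_quad)
      then have H: "Ham L z0 (- q) \<le> Hbar" by (rule phi_super)
      define v where "v = (- 1 / na) *\<^sub>R a"
      have nv: "norm v = 1" unfolding v_def na_def using na na_def by simp
      have "(- q) \<bullet> v = lc * (a \<bullet> a) / na\<^sup>2" unfolding q_def v_def
        by (simp add: power2_eq_square)
      also have "a \<bullet> a = na\<^sup>2" unfolding na_def by (simp add: power2_norm_eq_inner)
      finally have qv: "(- q) \<bullet> v = lc" using na by simp
      have "(- q) \<bullet> v - L z0 v \<le> Ham L z0 (- q)" by (rule Hge)
      moreover have "L z0 v \<le> C1" using C1[of v z0] nv by simp
      ultimately have "lc - C1 \<le> Hbar" using H qv by linarith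
      then show False unfolding lc_def by linarith
    qed
    then show ?thesis using glob[of z] unfolding g_def by simp
  qed
  show ?thesis using l0 main by (intro exI[of _ lc]) (auto simp: algebra_simps)
qed

end


context setting begin

definition "lipc = (SOME l. l > 0 \<and> (\<forall>x z. \<phi> z - \<phi> x \<le> l * norm (z - x)))"
definition "Mb = (SOME M. M \<ge> 0 \<and> (\<forall>z. \<bar>\<phi> z\<bar> \<le> M))"

lemma lipc: "lipc > 0" "\<phi> z - \<phi> x \<le> lipc * norm (z - x)"
  using someI_ex[OF lip] unfolding lipc_def by blast+

lemma Mb: "Mb \<ge> 0" "\<bar>\<phi> z\<bar> \<le> Mb"
  using someI_ex[OF phi_bnd] unfolding Mb_def by blast+

lemma norm_add_sq: "(norm (a + w))\<^sup>2 = (norm a)\<^sup>2 + 2 * (a \<bullet> w) + (norm (w::'a))\<^sup>2"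
  by (simp add: power2_norm_eq_inner inner_add algebra_simps inner_commute)

lemma small_from_lip:
  assumes k: "\<kappa> > 0" and h: "\<phi> x + (norm u)\<^sup>2 / (2 * \<kappa>\<^sup>2) \<le> \<phi> (x + u)"
  shows "norm u \<le> 2 * lipc * \<kappa>\<^sup>2"
proof -
  have "\<phi> (x + u) - \<phi> x \<le> lipc * norm u" using lipc(2)[of "x + u" x] by simp
  then have "(norm u)\<^sup>2 / (2 * \<kappa>\<^sup>2) \<le> lipc * norm u" using h by linarith
  then have "(norm u)\<^sup>2 \<le> (2 * lipc * \<kappa>\<^sup>2) * norm u" using k by (simp add: field_simps)
  then have "norm u * norm u \<le> (2 * lipc * \<kappa>\<^sup>2) * norm u" by (simp add: power2_eq_square)
  then show ?thesis
    by (cases "norm u = 0") (use lipc(1) k in auto)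
qed

lemma supconv_exists:
  assumes k: "\<kappa> > 0"
  shows "\<exists>\<beta>. \<forall>u. \<phi> (x + u) - (norm u)\<^sup>2 / (2 * \<kappa>\<^sup>2) \<le> \<phi> (x + \<beta>) - (norm \<beta>)\<^sup>2 / (2 * \<kappa>\<^sup>2)"
proof -
  define g where "g u = \<phi> (x + u) - (norm u)\<^sup>2 / (2 * \<kappa>\<^sup>2)" for u
  define \<rho> where "\<rho> = 2 * lipc * \<kappa>\<^sup>2 + 1"
  have \<rho>: "\<rho> > 0" unfolding \<rho>_def using lipc(1) k by (simp add: add_nonneg_pos)
  have cg: "continuous_on (cball 0 \<rho>) g"
    unfolding g_def using k by (intro continuous_intros continuous_on_compose2[OF phi_cont]) auto
  obtain b where b: "b \<in> cball 0 \<rho>" "\<And>u. u \<in> cball 0 \<rho> \<Longrightarrow> g u \<le> g b"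
    using continuous_attains_sup[OF compact_cball _ cg] \<rho> by (metis centre_in_cball less_imp_le empty_iff)
  have "g u \<le> g b" for u
  proof (cases "u \<in> cball 0 \<rho>")
    case True then show ?thesis by (rule b)
  next
    case False
    have "g u \<le> g 0"
    proof (rule ccontr)
      assume "\<not> g u \<le> g 0"
      then have "\<phi> x + (norm u)\<^sup>2 / (2 * \<kappa>\<^sup>2) \<le> \<phi> (x + u)" unfolding g_def by simp
      from small_from_lip[OF k this] False show False unfolding \<rho>_def by simp
    qed
    also have "g 0 \<le> g b" using b(2)[of 0] \<rho> by simp
    finally show ?thesis .
  qed
  then show ?thesis unfolding g_def by blast
qed

lemma supconv_props:
  assumes k: "\<kappa> > 0"
    and \<beta>: "\<And>u. \<phi> (x + u) - (norm u)\<^sup>2 / (2 * \<kappa>\<^sup>2) \<le> \<phi> (x + \<beta>) - (norm \<beta>)\<^sup>2 / (2 * \<kappa>\<^sup>2)"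
  shows "norm \<beta> \<le> 2 * lipc * \<kappa>\<^sup>2"
    and "\<And>u. - (((1 / \<kappa>\<^sup>2) *\<^sub>R \<beta>) \<bullet> u) - L (x + \<beta>) u \<le> Hbar"
proof -
  show "norm \<beta> \<le> 2 * lipc * \<kappa>\<^sup>2"
    using small_from_lip[OF k] \<beta>[of 0] by (simp add: algebra_simps)
  define p where "p = (1 / \<kappa>\<^sup>2) *\<^sub>R \<beta>"
  have "\<phi> (x + \<beta> + w) \<le> \<phi> (x + \<beta>) + p \<bullet> w + (1 / (2 * \<kappa>\<^sup>2)) * (norm w)\<^sup>2" for w
  proof -
    have "\<phi> (x + (\<beta> + w)) - (norm (\<beta> + w))\<^sup>2 / (2 * \<kappa>\<^sup>2) \<le> \<phi> (x + \<beta>) - (norm \<beta>)\<^sup>2 / (2 * \<kappa>\<^sup>2)"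
      by (rule \<beta>)
    moreover have "((norm (\<beta> + w))\<^sup>2 - (norm \<beta>)\<^sup>2) / (2 * \<kappa>\<^sup>2) = p \<bullet> w + (1 / (2 * \<kappa>\<^sup>2)) * (norm w)\<^sup>2"
      unfolding norm_add_sq p_def using k by (simp add: field_simps)
    ultimately show ?thesis by (simp add: diff_divide_distrib add.assoc)
  qed
  then have "p \<in> hadamard_superdiff \<phi> (x + \<beta>)"
    by (intro super_quad[where c="1 / (2 * \<kappa>\<^sup>2)"]) (simp add: add.assoc)
  then have H: "Ham L (x + \<beta>) (- p) \<le> Hbar" by (rule phi_super)
  fix u
  have "(- p) \<bullet> u - L (x + \<beta>) u \<le> Ham L (x + \<beta>) (- p)" by (rule Hge)
  then show "- (((1 / \<kappa>\<^sup>2) *\<^sub>R \<beta>) \<bullet> u) - L (x + \<beta>) u \<le> Hbar" using H unfolding p_def by simp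
qed

end


context setting begin

definition "C0 = (SOME C. C \<ge> 0 \<and> (\<forall>z. \<bar>L z 0\<bar> \<le> C))"

lemma C0: "C0 \<ge> 0" "\<bar>L z 0\<bar> \<le> C0"
proof -
  have "\<exists>C. C \<ge> 0 \<and> (\<forall>z. \<bar>L z 0\<bar> \<le> C)"
  proof -
    obtain C where "\<And>z u. u \<in> {0} \<Longrightarrow> \<bar>L z u\<bar> \<le> C"
      using L_bound[OF contL perL compact_sing[of 0]] by blast
    then show ?thesis by (metis abs_ge_zero order_trans singletonI)
  qed
  from someI_ex[OF this] show "C0 \<ge> 0" "\<bar>L z 0\<bar> \<le> C0" unfolding C0_def by blast+
qed

definition "Kc = 2 * lipc + \<bar>Hbar\<bar> + C0 + 1"

definition "Rv = (SOME R. R \<ge> 1 \<and> (\<forall>z u. norm u \<ge> R \<longrightarrow> L z u \<ge> Kc * norm u))"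

lemma Rv: "Rv \<ge> 1" "norm u \<ge> Rv \<Longrightarrow> L z u \<ge> Kc * norm u"
  using someI_ex[OF L_superlin[OF contL perL superlin, of Kc]] unfolding Rv_def by blast+

lemma L_lower_near:
  assumes "\<eta> > 0"
  shows "\<exists>\<delta>>0. \<forall>z z' p. dist z z' < \<delta> \<longrightarrow> norm p \<le> 2 * lipc \<longrightarrow>
     (\<forall>u. - (p \<bullet> u) - L z' u \<le> Hbar) \<longrightarrow> (\<forall>u. L z u \<ge> - Hbar - p \<bullet> u - \<eta>)"
proof -
  obtain \<delta> where \<delta>: "\<delta> > 0" "\<And>z z' u. norm u \<le> Rv \<Longrightarrow> dist z z' < \<delta> \<Longrightarrow> \<bar>L z u - L z' u\<bar> < \<eta>"
    using L_unif[OF contL perL assms, of Rv] by blast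
  show ?thesis
  proof (intro exI[of _ \<delta>] conjI allI impI)
    fix z z' p u assume d: "dist z z' < \<delta>" and p: "norm p \<le> 2 * lipc"
      and H: "\<forall>u. - (p \<bullet> u) - L z' u \<le> Hbar"
    have pu: "\<bar>p \<bullet> u\<bar> \<le> 2 * lipc * norm u"
      using Cauchy_Schwarz_ineq2[of p u] p mult_right_mono[OF p norm_ge_zero[of u]] by linarith
    show "L z u \<ge> - Hbar - p \<bullet> u - \<eta>"
    proof (cases "norm u \<le> Rv")
      case True
      then have "\<bar>L z u - L z' u\<bar> < \<eta>" using \<delta>(2) d by blast
      moreover have "- (p \<bullet> u) - L z' u \<le> Hbar" using H by blast
      ultimately show ?thesis by linarith
    next
      case False
      then have "L z u \<ge> Kc * norm u" using Rv(2) by simp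
      moreover have "Kc * norm u \<ge> 2 * lipc * norm u + \<bar>Hbar\<bar>"
      proof -
        have "Kc * norm u = 2 * lipc * norm u + (\<bar>Hbar\<bar> + C0 + 1) * norm u" unfolding Kc_def by (simp add: algebra_simps)
        moreover have "(\<bar>Hbar\<bar> + C0 + 1) * norm u \<ge> (\<bar>Hbar\<bar> + C0 + 1) * 1"
          using False Rv(1) C0(1) by (intro mult_left_mono) auto
        ultimately show ?thesis using C0(1) by simp
      qed
      ultimately show ?thesis using pu \<open>\<eta> > 0\<close> by linarith
    qed
  qed (use \<delta> in auto)
qed

end

locale fb_setting = setting L \<phi> Hbar
  for L :: "'a::euclidean_space \<Rightarrow> 'a \<Rightarrow> real" and \<phi> Hbar +
  fixes b :: "real \<Rightarrow> 'a \<Rightarrow> 'a" and vv :: "real \<Rightarrow> 'a \<Rightarrow> 'a"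
  assumes b_min: "\<And>\<kappa> x u. \<kappa> > 0 \<Longrightarrow>
       \<phi> (x + b \<kappa> x) + (norm (b \<kappa> x))\<^sup>2 / (2 * \<kappa>\<^sup>2) \<le> \<phi> (x + u) + (norm u)\<^sup>2 / (2 * \<kappa>\<^sup>2)"
    and vv_max: "\<And>\<kappa> x u. \<kappa> > 0 \<Longrightarrow>
       (let p = (1 / \<kappa>\<^sup>2) *\<^sub>R (- b \<kappa> x) in
          - (p \<bullet> u) - L (x + b \<kappa> x) u \<le> - (p \<bullet> vv \<kappa> x) - L (x + b \<kappa> x) (vv \<kappa> x))"
begin

definition "Fk \<kappa> x = \<phi> (x + b \<kappa> x) + (norm (b \<kappa> x))\<^sup>2 / (2 * \<kappa>\<^sup>2)"

lemma b_small: "\<kappa> > 0 \<Longrightarrow> norm (b \<kappa> x) \<le> 2 * lipc * \<kappa>\<^sup>2"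
  using small_from_lip[of \<kappa> "x + b \<kappa> x" "- b \<kappa> x"] b_min[of \<kappa> x 0] by simp

lemma Fk_bound: "\<kappa> > 0 \<Longrightarrow> \<bar>Fk \<kappa> x\<bar> \<le> Mb"
proof -
  assume k: "\<kappa> > 0"
  have "Fk \<kappa> x \<le> \<phi> x" unfolding Fk_def using b_min[OF k, of x 0] by simp
  moreover have "Fk \<kappa> x \<ge> \<phi> (x + b \<kappa> x)" unfolding Fk_def using k by simp
  ultimately show ?thesis using Mb(2)[of x] Mb(2)[of "x + b \<kappa> x"] by linarith
qed

lemma vv_opt:
  assumes k: "\<kappa> > 0"
  shows "- (((1 / \<kappa>\<^sup>2) *\<^sub>R (- b \<kappa> x)) \<bullet> u) - L (x + b \<kappa> x) u
     \<le> - (((1 / \<kappa>\<^sup>2) *\<^sub>R (- b \<kappa> x)) \<bullet> vv \<kappa> x) - L (x + b \<kappa> x) (vv \<kappa> x)"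
  using vv_max[OF k, of x u] by (simp add: Let_def)

lemma L_fb:
  assumes k: "\<kappa> > 0"
  shows "L (x + b \<kappa> x) (vv \<kappa> x) \<le> - Hbar + (b \<kappa> x \<bullet> vv \<kappa> x) / \<kappa>\<^sup>2"
proof -
  define p where "p = (1 / \<kappa>\<^sup>2) *\<^sub>R (- b \<kappa> x)"
  define z where "z = x + b \<kappa> x"
  have "\<phi> z + p \<bullet> w - (1 / (2 * \<kappa>\<^sup>2)) * (norm w)\<^sup>2 \<le> \<phi> (z + w)" for w
  proof -
    have "\<phi> (x + b \<kappa> x) + (norm (b \<kappa> x))\<^sup>2 / (2 * \<kappa>\<^sup>2) \<le> \<phi> (x + (b \<kappa> x + w)) + (norm (b \<kappa> x + w))\<^sup>2 / (2 * \<kappa>\<^sup>2)"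
      by (rule b_min[OF k])
    moreover have "((norm (b \<kappa> x + w))\<^sup>2 - (norm (b \<kappa> x))\<^sup>2) / (2 * \<kappa>\<^sup>2) = - (p \<bullet> w) + (1 / (2 * \<kappa>\<^sup>2)) * (norm w)\<^sup>2"
      unfolding norm_add_sq p_def using k by (simp add: field_simps)
    ultimately show ?thesis unfolding z_def by (simp add: diff_divide_distrib add.assoc)
  qed
  then have "p \<in> hadamard_subdiff \<phi> z" by (rule sub_quad)
  then have "Hbar \<le> Ham L z (- p)" by (rule phi_sub)
  also have "Ham L z (- p) \<le> - (p \<bullet> vv \<kappa> x) - L z (vv \<kappa> x)"
    by (rule Ham_le) (use vv_opt[OF k, of x] in \<open>simp add: p_def z_def\<close>)
  finally have "L z (vv \<kappa> x) \<le> - Hbar - p \<bullet> vv \<kappa> x" by simp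
  moreover have "- (p \<bullet> vv \<kappa> x) = (b \<kappa> x \<bullet> vv \<kappa> x) / \<kappa>\<^sup>2" unfolding p_def by simp
  ultimately show ?thesis unfolding z_def by simp
qed

lemma vv_bound:
  assumes k: "\<kappa> > 0"
  shows "norm (vv \<kappa> x) < Rv"
proof (rule ccontr)
  assume "\<not> norm (vv \<kappa> x) < Rv"
  then have big: "norm (vv \<kappa> x) \<ge> Rv" by simp
  define w where "w = vv \<kappa> x"
  define p where "p = (1 / \<kappa>\<^sup>2) *\<^sub>R (- b \<kappa> x)"
  have np: "norm p \<le> 2 * lipc"
    using b_small[OF k, of x] k unfolding p_def by (simp add: field_simps)
  have "- (p \<bullet> 0) - L (x + b \<kappa> x) 0 \<le> - (p \<bullet> w) - L (x + b \<kappa> x) w"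
    using vv_opt[OF k, of x 0] unfolding p_def w_def by simp
  then have "L (x + b \<kappa> x) w \<le> C0 + norm p * norm w"
    using C0(2)[of "x + b \<kappa> x"] Cauchy_Schwarz_ineq2[of p w] by simp
  also have "\<dots> \<le> C0 + 2 * lipc * norm w" using np by (simp add: mult_right_mono)
  finally have 1: "L (x + b \<kappa> x) w \<le> C0 + 2 * lipc * norm w" .
  have 2: "L (x + b \<kappa> x) w \<ge> Kc * norm w" using Rv(2) big unfolding w_def by blast
  have "Kc * norm w = 2 * lipc * norm w + (\<bar>Hbar\<bar> + C0 + 1) * norm w" unfolding Kc_def by (simp add: algebra_simps)
  moreover have "(\<bar>Hbar\<bar> + C0 + 1) * norm w \<ge> (\<bar>Hbar\<bar> + C0 + 1) * 1"
    using big Rv(1) C0(1) unfolding w_def by (intro mult_left_mono) auto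
  ultimately show False using 1 2 by simp
qed

lemma step_ineq:
  assumes k: "\<kappa> > 0" and t: "\<tau> \<ge> 0"
  shows "\<tau> * L (x + b \<kappa> x) (vv \<kappa> x) \<le> - Hbar * \<tau> + Fk \<kappa> x - Fk \<kappa> (x + \<tau> *\<^sub>R vv \<kappa> x)
           + \<tau>\<^sup>2 * Rv\<^sup>2 / (2 * \<kappa>\<^sup>2)"
proof -
  define w where "w = vv \<kappa> x"
  define B where "B = b \<kappa> x"
  have "Fk \<kappa> (x + \<tau> *\<^sub>R w) \<le> \<phi> (x + \<tau> *\<^sub>R w + (B - \<tau> *\<^sub>R w)) + (norm (B - \<tau> *\<^sub>R w))\<^sup>2 / (2 * \<kappa>\<^sup>2)"
    unfolding Fk_def by (rule b_min[OF k])
  also have "x + \<tau> *\<^sub>R w + (B - \<tau> *\<^sub>R w) = x + B" by simp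
  also have "(norm (B - \<tau> *\<^sub>R w))\<^sup>2 = (norm B)\<^sup>2 - 2 * \<tau> * (B \<bullet> w) + \<tau>\<^sup>2 * (norm w)\<^sup>2"
    using norm_add_sq[of B "- (\<tau> *\<^sub>R w)"] by (simp add: power2_eq_square)
  finally have 0: "Fk \<kappa> (x + \<tau> *\<^sub>R w) \<le> \<phi> (x + B) + ((norm B)\<^sup>2 - 2 * \<tau> * (B \<bullet> w) + \<tau>\<^sup>2 * (norm w)\<^sup>2) / (2 * \<kappa>\<^sup>2)" .
  have eq: "((norm B)\<^sup>2 - 2 * \<tau> * (B \<bullet> w) + \<tau>\<^sup>2 * (norm w)\<^sup>2) / (2 * \<kappa>\<^sup>2)
     = (norm B)\<^sup>2 / (2 * \<kappa>\<^sup>2) - \<tau> * (B \<bullet> w) / \<kappa>\<^sup>2 + \<tau>\<^sup>2 * (norm w)\<^sup>2 / (2 * \<kappa>\<^sup>2)"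
    using k by (simp add: field_simps)
  have 1: "Fk \<kappa> (x + \<tau> *\<^sub>R w) \<le> Fk \<kappa> x - \<tau> * (B \<bullet> w) / \<kappa>\<^sup>2 + \<tau>\<^sup>2 * (norm w)\<^sup>2 / (2 * \<kappa>\<^sup>2)"
    using 0 eq unfolding Fk_def B_def by linarith
  have "(norm w)\<^sup>2 \<le> Rv\<^sup>2" using vv_bound[OF k, of x] unfolding w_def
    by (intro power_mono) auto
  then have 2: "\<tau>\<^sup>2 * (norm w)\<^sup>2 / (2 * \<kappa>\<^sup>2) \<le> \<tau>\<^sup>2 * Rv\<^sup>2 / (2 * \<kappa>\<^sup>2)"
    using k by (intro divide_right_mono mult_left_mono) auto
  have 3: "\<tau> * L (x + B) w \<le> \<tau> * (- Hbar + (B \<bullet> w) / \<kappa>\<^sup>2)"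
    using L_fb[OF k, of x] t unfolding B_def w_def by (intro mult_left_mono) auto
  show ?thesis using 1 2 3 unfolding w_def[symmetric] B_def[symmetric]
    by (simp add: algebra_simps)
qed

end


lemma mono_steps:
  fixes t :: "nat \<Rightarrow> real"
  assumes "\<And>i. i < n \<Longrightarrow> t i \<le> t (Suc i)" "i \<le> j" "j \<le> n"
  shows "t i \<le> t j"
  using assms(2,3)
proof (induction j)
  case 0 then show ?case by simp
next
  case (Suc j)
  show ?case
  proof (cases "i = Suc j")
    case False
    then have "t i \<le> t j" using Suc by simp
    also have "t j \<le> t (Suc j)" using assms(1) Suc by simp
    finally show ?thesis .
  qed simp
qed

lemma set_integrable_sing:
  fixes F :: "real \<Rightarrow> 'b::euclidean_space"
  shows "set_integrable lborel {a..a} F" "(LINT s:{a..a}|lborel. F s) = 0"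
proof -
  have c: "continuous_on {a..a} F" by simp
  show si: "set_integrable lborel {a..a} F" by (rule borel_integrable_atLeastAtMost'[OF c])
  show "(LINT s:{a..a}|lborel. F s) = 0" using set_borel_integral_eq_integral(2)[OF si] by simp
qed

lemma piece_step:
  fixes F g :: "real \<Rightarrow> 'b::euclidean_space"
  assumes ab: "a \<le> b" and bc: "b \<le> c" and iF: "set_integrable lborel {a..b} F"
    and cg: "continuous_on {b..c} g" and eq: "\<And>s. b \<le> s \<Longrightarrow> s < c \<Longrightarrow> F s = g s"
  shows "set_integrable lborel {a..c} F"
    "(LINT s:{a..c}|lborel. F s) = (LINT s:{a..b}|lborel. F s) + integral {b..c} g"
proof -
  have g1: "set_integrable lborel {b..c} g" by (rule borel_integrable_atLeastAtMost'[OF cg])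
  have "set_integrable lborel {b..<c} g" by (rule set_integrable_subset[OF g1]) auto
  then have f1: "set_integrable lborel {b..<c} F"
    by (subst set_integrable_cong[OF refl refl, of _ _ g]) (auto simp: eq)
  have f2: "set_integrable lborel {c..c} F" by (rule set_integrable_sing)
  have "set_integrable lborel ({a..b} \<union> ({b..<c} \<union> {c..c})) F"
    by (intro set_integrable_Un iF f1 f2) auto
  moreover have "{a..b} \<union> ({b..<c} \<union> {c..c}) = {a..c}" using ab bc by auto
  ultimately show si: "set_integrable lborel {a..c} F" by simp
  have "(LINT s:{a..c}|lborel. F s) = integral {a..c} F"
    by (rule set_borel_integral_eq_integral(2)[OF si])
  also have "\<dots> = integral {a..b} F + integral {b..c} F"
    using Henstock_Kurzweil_Integration.integral_combine[OF ab bc set_borel_integral_eq_integral(1)[OF si]] by simp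
  also have "integral {a..b} F = (LINT s:{a..b}|lborel. F s)"
    by (rule set_borel_integral_eq_integral(2)[OF iF, symmetric])
  also have "integral {b..c} F = integral {b..c} g"
    by (rule integral_spike[of "{c}"]) (auto simp: eq)
  finally show "(LINT s:{a..c}|lborel. F s) = (LINT s:{a..b}|lborel. F s) + integral {b..c} g" .
qed

lemma piecewise_int:
  fixes F :: "real \<Rightarrow> 'b::euclidean_space" and g :: "nat \<Rightarrow> real \<Rightarrow> 'b"
  assumes mono: "\<And>i. i < n \<Longrightarrow> t i \<le> t (Suc i)"
    and cg: "\<And>i. i < n \<Longrightarrow> continuous_on {t i..t (Suc i)} (g i)"
    and eq: "\<And>i s. i < n \<Longrightarrow> t i \<le> s \<Longrightarrow> s < t (Suc i) \<Longrightarrow> F s = g i s"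
  shows "set_integrable lborel {t 0..t n} F \<and>
    (LINT s:{t 0..t n}|lborel. F s) = (\<Sum>i<n. integral {t i..t (Suc i)} (g i))"
  using mono cg eq
proof (induction n)
  case 0
  then show ?case using set_integrable_sing[of "t 0" F] by simp
next
  case (Suc n)
  have IH: "set_integrable lborel {t 0..t n} F \<and>
    (LINT s:{t 0..t n}|lborel. F s) = (\<Sum>i<n. integral {t i..t (Suc i)} (g i))"
    using Suc by simp
  have ab: "t 0 \<le> t n" using mono_steps[of "Suc n" t 0 n] Suc.prems(1) by simp
  have bc: "t n \<le> t (Suc n)" using Suc.prems(1) by simp
  note ps = piece_step[OF ab bc conjunct1[OF IH] Suc.prems(2)[of n] Suc.prems(3)[of n]]
  show ?case using ps IH by simp
qed



lemma part_props:
  assumes "is_partition r (n, t)"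
  shows "0 < n" "t 0 = 0" "t n = r" "\<And>i. i < n \<Longrightarrow> t i < t (Suc i)"
  using assms unfolding is_partition_def by auto

lemma part_mono:
  assumes P: "is_partition r (n, t)" and "i \<le> j" "j \<le> n"
  shows "t i \<le> t j"
  using mono_steps[of n t i j] part_props(4)[OF P] assms(2,3) by (meson less_imp_le)

lemma seg_index_eq:
  assumes P: "is_partition r (n, t)" and i: "i < n" "t i \<le> s" "s < t (Suc i)"
  shows "seg_index (n, t) s = i"
  unfolding seg_index_def
proof (simp, rule the_equality)
  show "i < n \<and> t i \<le> s \<and> s < t (Suc i)" using i by simp
  fix j assume j: "j < n \<and> t j \<le> s \<and> s < t (Suc j)"
  show "j = i"
  proof (rule ccontr)
    assume "j \<noteq> i"
    then consider "j < i" | "i < j" by linarith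
    then show False
    proof cases
      case 1
      then have "t (Suc j) \<le> t i" using part_mono[OF P, of "Suc j" i] i by simp
      then show False using i j by simp
    next
      case 2
      then have "t (Suc i) \<le> t j" using part_mono[OF P, of "Suc i" j] j by simp
      then show False using i j by simp
    qed
  qed
qed

lemma fb_eqs:
  assumes P: "is_partition r (n, t)" and i: "i < n" "t i \<le> s" "s < t (Suc i)"
  shows "fb_v V y (n, t) s = V (fb_node V y t i)"
    "fb_x V y (n, t) s = fb_node V y t i + (s - t i) *\<^sub>R V (fb_node V y t i)"
  using seg_index_eq[OF assms] unfolding fb_v_def fb_x_def by (simp_all add: Let_def)

lemma fineness_ge:
  assumes "i < n"
  shows "t (Suc i) - t i \<le> fineness (n, t)"
  unfolding fineness_def using assms by (simp add: Max_ge)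

context fb_setting begin

lemma traj_bound:
  fixes t :: "nat \<Rightarrow> real" and F :: "real \<Rightarrow> real"
  assumes k: "\<kappa> > 0" and P: "is_partition r (n, t)"
    and unif: "\<And>z z' u. norm u \<le> Rv \<Longrightarrow> dist z z' < \<delta> \<Longrightarrow> \<bar>L z u - L z' u\<bar> < \<eta>"
    and fin: "fineness (n, t) * Rv + 2 * lipc * \<kappa>\<^sup>2 < \<delta>"
    and Feq: "\<And>i s. i < n \<Longrightarrow> t i \<le> s \<Longrightarrow> s < t (Suc i) \<Longrightarrow>
       F s = L (fb_node (vv \<kappa>) y t i + (s - t i) *\<^sub>R vv \<kappa> (fb_node (vv \<kappa>) y t i)) (vv \<kappa> (fb_node (vv \<kappa>) y t i))"
  shows "set_integrable lborel {0..r} F \<and>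
    (LINT s:{0..r}|lborel. F s) \<le> - Hbar * r + 2 * Mb + r * (fineness (n, t) * Rv\<^sup>2 / (2 * \<kappa>\<^sup>2) + \<eta>)"
proof -
  define nd where "nd i = fb_node (vv \<kappa>) y t i" for i
  define w where "w i = vv \<kappa> (nd i)" for i
  define g where "g i s = L (nd i + (s - t i) *\<^sub>R w i) (w i)" for i s
  define \<tau> where "\<tau> i = t (Suc i) - t i" for i
  define d where "d = fineness (n, t)"
  note pp = part_props[OF P]
  have \<tau>0: "\<tau> i \<ge> 0" if "i < n" for i using pp(4)[OF that] unfolding \<tau>_def by simp
  have \<tau>d: "\<tau> i \<le> d" if "i < n" for i using fineness_ge[OF that] unfolding \<tau>_def d_def by simp
  have cg: "continuous_on {t i..t (Suc i)} (g i)" for i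
  proof -
    have "continuous_on {t i..t (Suc i)} (\<lambda>s. (\<lambda>(x, v). L x v) (nd i + (s - t i) *\<^sub>R w i, w i))"
      by (rule continuous_on_compose2[OF contL]) (auto intro!: continuous_intros)
    then show ?thesis unfolding g_def by simp
  qed
  have PI: "set_integrable lborel {t 0..t n} F \<and>
    (LINT s:{t 0..t n}|lborel. F s) = (\<Sum>i<n. integral {t i..t (Suc i)} (g i))"
    by (rule piecewise_int) (use pp(4) cg Feq in \<open>auto simp: g_def nd_def w_def less_imp_le\<close>)
  have piece: "integral {t i..t (Suc i)} (g i) \<le> \<tau> i * (L (nd i + b \<kappa> (nd i)) (w i) + \<eta>)"
    if i: "i < n" for i
  proof -
    have "integral {t i..t (Suc i)} (g i) \<le> integral {t i..t (Suc i)} (\<lambda>s. L (nd i + b \<kappa> (nd i)) (w i) + \<eta>)"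
    proof (rule integral_le)
      show "g i integrable_on {t i..t (Suc i)}" by (rule integrable_continuous_interval[OF cg])
      show "(\<lambda>s. L (nd i + b \<kappa> (nd i)) (w i) + \<eta>) integrable_on {t i..t (Suc i)}" by (rule integrable_continuous_interval) (rule continuous_on_const)
      fix s assume s: "s \<in> {t i..t (Suc i)}"
      have wR: "norm (w i) \<le> Rv" using vv_bound[OF k] unfolding w_def by (simp add: less_imp_le)
      have "dist (nd i + (s - t i) *\<^sub>R w i) (nd i + b \<kappa> (nd i)) = norm ((s - t i) *\<^sub>R w i - b \<kappa> (nd i))"
        by (simp add: dist_norm)
      also have "\<dots> \<le> norm ((s - t i) *\<^sub>R w i) + norm (b \<kappa> (nd i))" by (rule norm_triangle_ineq4)
      also have "norm ((s - t i) *\<^sub>R w i) \<le> d * Rv"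
      proof -
        have "norm ((s - t i) *\<^sub>R w i) = (s - t i) * norm (w i)" using s by simp
        also have "\<dots> \<le> d * Rv" using s \<tau>d[OF i] wR unfolding \<tau>_def
          by (intro mult_mono) auto
        finally show ?thesis .
      qed
      also have "norm (b \<kappa> (nd i)) \<le> 2 * lipc * \<kappa>\<^sup>2" by (rule b_small[OF k])
      finally have "dist (nd i + (s - t i) *\<^sub>R w i) (nd i + b \<kappa> (nd i)) < \<delta>"
        using fin unfolding d_def by linarith
      then show "g i s \<le> L (nd i + b \<kappa> (nd i)) (w i) + \<eta>"
        using unif[OF wR] unfolding g_def by fastforce
    qed
    also have "\<dots> = \<tau> i * (L (nd i + b \<kappa> (nd i)) (w i) + \<eta>)"
      using pp(4)[OF i] unfolding \<tau>_def by simp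
    finally show ?thesis .
  qed
  have step: "\<tau> i * (L (nd i + b \<kappa> (nd i)) (w i) + \<eta>) \<le>
      - Hbar * \<tau> i + Fk \<kappa> (nd i) - Fk \<kappa> (nd (Suc i)) + \<tau> i * (d * Rv\<^sup>2 / (2 * \<kappa>\<^sup>2) + \<eta>)"
    if i: "i < n" for i
  proof -
    have ns: "nd (Suc i) = nd i + \<tau> i *\<^sub>R w i" unfolding nd_def w_def \<tau>_def by simp
    have 1: "\<tau> i * L (nd i + b \<kappa> (nd i)) (w i) \<le> - Hbar * \<tau> i + Fk \<kappa> (nd i) - Fk \<kappa> (nd (Suc i))
           + (\<tau> i)\<^sup>2 * Rv\<^sup>2 / (2 * \<kappa>\<^sup>2)"
      using step_ineq[OF k \<tau>0[OF i], of "nd i"] unfolding ns w_def by simp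
    have "(\<tau> i)\<^sup>2 * Rv\<^sup>2 / (2 * \<kappa>\<^sup>2) = \<tau> i * (\<tau> i * Rv\<^sup>2 / (2 * \<kappa>\<^sup>2))" by (simp add: power2_eq_square)
    also have "\<dots> \<le> \<tau> i * (d * Rv\<^sup>2 / (2 * \<kappa>\<^sup>2))"
      using \<tau>0[OF i] \<tau>d[OF i] k by (intro mult_left_mono divide_right_mono mult_right_mono) auto
    finally show ?thesis using 1 by (simp add: algebra_simps)
  qed
  have "(\<Sum>i<n. integral {t i..t (Suc i)} (g i)) \<le>
      (\<Sum>i<n. - Hbar * \<tau> i + (Fk \<kappa> (nd i) - Fk \<kappa> (nd (Suc i))) + \<tau> i * (d * Rv\<^sup>2 / (2 * \<kappa>\<^sup>2) + \<eta>))"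
    by (rule sum_mono) (use piece step in \<open>fastforce\<close>)
  also have "\<dots> = (\<Sum>i<n. - Hbar * \<tau> i) + (\<Sum>i<n. Fk \<kappa> (nd i) - Fk \<kappa> (nd (Suc i)))
       + (\<Sum>i<n. \<tau> i * (d * Rv\<^sup>2 / (2 * \<kappa>\<^sup>2) + \<eta>))"
    by (simp only: sum.distrib)
  also have "(\<Sum>i<n. - Hbar * \<tau> i) = - Hbar * (\<Sum>i<n. \<tau> i)" by (simp add: sum_distrib_left)
  also have "(\<Sum>i<n. \<tau> i * (d * Rv\<^sup>2 / (2 * \<kappa>\<^sup>2) + \<eta>)) = (\<Sum>i<n. \<tau> i) * (d * Rv\<^sup>2 / (2 * \<kappa>\<^sup>2) + \<eta>)"
    by (simp add: sum_distrib_right)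
  also have "(\<Sum>i<n. \<tau> i) = r" unfolding \<tau>_def using sum_lessThan_telescope[of t n] pp by simp
  also have "(\<Sum>i<n. Fk \<kappa> (nd i) - Fk \<kappa> (nd (Suc i))) = Fk \<kappa> (nd 0) - Fk \<kappa> (nd n)"
    by (rule sum_lessThan_telescope')
  also have "Fk \<kappa> (nd 0) - Fk \<kappa> (nd n) \<le> 2 * Mb"
    using Fk_bound[OF k, of "nd 0"] Fk_bound[OF k, of "nd n"] by linarith
  finally have "(\<Sum>i<n. integral {t i..t (Suc i)} (g i)) \<le> - Hbar * r + 2 * Mb + r * (d * Rv\<^sup>2 / (2 * \<kappa>\<^sup>2) + \<eta>)"
    by simp
  then show ?thesis using PI pp unfolding d_def by simp
qed

end


context fb_setting begin

lemma fb_choice: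
  assumes e: "\<epsilon> > 0"
  shows "\<exists>\<kappa>0>0. \<forall>\<kappa>\<in>{0<..\<kappa>0}. \<exists>\<delta>'>0. \<forall>r y n t F. r > 0 \<longrightarrow> is_partition r (n, t) \<longrightarrow> fineness (n, t) < \<delta>' \<longrightarrow>
     (\<forall>i s. i < n \<longrightarrow> t i \<le> s \<longrightarrow> s < t (Suc i) \<longrightarrow>
       F s = L (fb_node (vv \<kappa>) y t i + (s - t i) *\<^sub>R vv \<kappa> (fb_node (vv \<kappa>) y t i)) (vv \<kappa> (fb_node (vv \<kappa>) y t i))) \<longrightarrow>
     set_integrable lborel {0..r} F \<and> (LINT s:{0..r}|lborel. F s) \<le> - Hbar * r + 2 * Mb + r * (\<epsilon> / 2)"
proof -
  define \<eta> where "\<eta> = \<epsilon> / 4"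
  have \<eta>: "\<eta> > 0" using e unfolding \<eta>_def by simp
  obtain \<delta> where \<delta>: "\<delta> > 0" "\<And>z z' u. norm u \<le> Rv \<Longrightarrow> dist z z' < \<delta> \<Longrightarrow> \<bar>L z u - L z' u\<bar> < \<eta>"
    using L_unif[OF contL perL \<eta>, of Rv] by blast
  define \<kappa>0 where "\<kappa>0 = sqrt (\<delta> / (4 * lipc))"
  have k0: "\<kappa>0 > 0" unfolding \<kappa>0_def using \<delta> lipc(1) by simp
  show ?thesis
  proof (rule exI[of _ \<kappa>0], intro conjI[OF k0] ballI)
    fix \<kappa> assume "\<kappa> \<in> {0<..\<kappa>0}"
    then have k: "\<kappa> > 0" "\<kappa> \<le> \<kappa>0" by auto
    have "\<kappa>\<^sup>2 \<le> \<kappa>0\<^sup>2" using k by (intro power_mono) auto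
    also have "\<kappa>0\<^sup>2 = \<delta> / (4 * lipc)" unfolding \<kappa>0_def using \<delta> lipc(1) by simp
    finally have "\<kappa>\<^sup>2 \<le> \<delta> / (4 * lipc)" .
    then have "4 * lipc * \<kappa>\<^sup>2 \<le> \<delta>" using lipc(1) by (simp add: pos_le_divide_eq algebra_simps)
    then have kk: "2 * lipc * \<kappa>\<^sup>2 \<le> \<delta> / 2" by simp
    have Rv0: "Rv > 0" using Rv(1) by simp
    define \<delta>' where "\<delta>' = min (\<delta> / (2 * Rv)) (\<epsilon> * \<kappa>\<^sup>2 / (2 * Rv\<^sup>2))"
    have d': "\<delta>' > 0" unfolding \<delta>'_def using \<delta> Rv0 e k by simp
    show "\<exists>\<delta>'>0. \<forall>r y n t F. r > 0 \<longrightarrow> is_partition r (n, t) \<longrightarrow> fineness (n, t) < \<delta>' \<longrightarrow>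
     (\<forall>i s. i < n \<longrightarrow> t i \<le> s \<longrightarrow> s < t (Suc i) \<longrightarrow>
       F s = L (fb_node (vv \<kappa>) y t i + (s - t i) *\<^sub>R vv \<kappa> (fb_node (vv \<kappa>) y t i)) (vv \<kappa> (fb_node (vv \<kappa>) y t i))) \<longrightarrow>
     set_integrable lborel {0..r} F \<and> (LINT s:{0..r}|lborel. F s) \<le> - Hbar * r + 2 * Mb + r * (\<epsilon> / 2)"
    proof (rule exI[of _ \<delta>'], intro conjI[OF d'] allI impI)
      fix r y n t F
      assume r: "(r::real) > 0" and P: "is_partition r (n, t)" and fin: "fineness (n, t) < \<delta>'"
        and Feq: "\<forall>i s. i < n \<longrightarrow> t i \<le> s \<longrightarrow> s < t (Suc i) \<longrightarrow>
       F s = L (fb_node (vv \<kappa>) y t i + (s - t i) *\<^sub>R vv \<kappa> (fb_node (vv \<kappa>) y t i)) (vv \<kappa> (fb_node (vv \<kappa>) y t i))"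
      define d where "d = fineness (n, t)"
      have d0: "d \<ge> 0"
      proof -
        have "t (Suc 0) - t 0 \<le> d" unfolding d_def using fineness_ge part_props(1)[OF P] by blast
        then show ?thesis using part_props(4)[OF P, of 0] part_props(1)[OF P] by simp
      qed
      have "d * (2 * Rv) < \<delta>" using fin Rv0 unfolding d_def \<delta>'_def by (simp add: pos_less_divide_eq)
      then have "d * Rv < \<delta> / 2" by simp
      then have fin1: "d * Rv + 2 * lipc * \<kappa>\<^sup>2 < \<delta>" using kk by simp
      have "d * Rv\<^sup>2 / (2 * \<kappa>\<^sup>2) \<le> (\<epsilon> * \<kappa>\<^sup>2 / (2 * Rv\<^sup>2)) * Rv\<^sup>2 / (2 * \<kappa>\<^sup>2)"
        using fin k unfolding d_def \<delta>'_def by (intro divide_right_mono mult_right_mono) auto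
      also have "\<dots> = \<epsilon> / 4" using Rv0 k by (simp add: field_simps)
      finally have fin2: "d * Rv\<^sup>2 / (2 * \<kappa>\<^sup>2) \<le> \<epsilon> / 4" .
      have tb: "set_integrable lborel {0..r} F \<and>
        (LINT s:{0..r}|lborel. F s) \<le> - Hbar * r + 2 * Mb + r * (d * Rv\<^sup>2 / (2 * \<kappa>\<^sup>2) + \<eta>)"
        unfolding d_def by (rule traj_bound[OF k(1) P \<delta>(2)]) (use fin1 Feq d_def in auto)
      have "r * (d * Rv\<^sup>2 / (2 * \<kappa>\<^sup>2) + \<eta>) \<le> r * (\<epsilon> / 2)"
        using fin2 r unfolding \<eta>_def by (intro mult_left_mono) auto
      then show "set_integrable lborel {0..r} F \<and> (LINT s:{0..r}|lborel. F s) \<le> - Hbar * r + 2 * Mb + r * (\<epsilon> / 2)"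
        using tb by linarith
    qed
  qed
qed

lemma part2:
  "\<forall>\<epsilon>>0. \<exists>\<kappa>0>0. \<forall>\<kappa>\<in>{0<..\<kappa>0}. \<forall>y.
     Limsup at_top (\<lambda>r. limsup_fine r (fb_avg_cost L (vv \<kappa>) y r)) \<le> ereal (- Hbar + \<epsilon>)"
proof (intro allI impI)
  fix \<epsilon> :: real assume e: "\<epsilon> > 0"
  obtain \<kappa>0 where k0: "\<kappa>0 > 0" and ch: "\<And>\<kappa>. \<kappa> \<in> {0<..\<kappa>0} \<Longrightarrow> \<exists>\<delta>'>0. \<forall>r y n t F. r > 0 \<longrightarrow> is_partition r (n, t) \<longrightarrow> fineness (n, t) < \<delta>' \<longrightarrow>
     (\<forall>i s. i < n \<longrightarrow> t i \<le> s \<longrightarrow> s < t (Suc i) \<longrightarrow>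
       F s = L (fb_node (vv \<kappa>) y t i + (s - t i) *\<^sub>R vv \<kappa> (fb_node (vv \<kappa>) y t i)) (vv \<kappa> (fb_node (vv \<kappa>) y t i))) \<longrightarrow>
     set_integrable lborel {0..r} F \<and> (LINT s:{0..r}|lborel. F s) \<le> - Hbar * r + 2 * Mb + r * (\<epsilon> / 2)"
    using fb_choice[OF e] by blast
  show "\<exists>\<kappa>0>0. \<forall>\<kappa>\<in>{0<..\<kappa>0}. \<forall>y.
     Limsup at_top (\<lambda>r. limsup_fine r (fb_avg_cost L (vv \<kappa>) y r)) \<le> ereal (- Hbar + \<epsilon>)"
  proof (intro exI[of _ \<kappa>0] conjI k0 ballI allI)
    fix \<kappa> y assume kin: "\<kappa> \<in> {0<..\<kappa>0}"
    obtain \<delta>' where d': "\<delta>' > 0" and H: "\<And>r y n t F. r > 0 \<Longrightarrow> is_partition r (n, t) \<Longrightarrow> fineness (n, t) < \<delta>' \<Longrightarrow>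
     (\<forall>i s. i < n \<longrightarrow> t i \<le> s \<longrightarrow> s < t (Suc i) \<longrightarrow>
       F s = L (fb_node (vv \<kappa>) y t i + (s - t i) *\<^sub>R vv \<kappa> (fb_node (vv \<kappa>) y t i)) (vv \<kappa> (fb_node (vv \<kappa>) y t i))) \<Longrightarrow>
     set_integrable lborel {0..r} F \<and> (LINT s:{0..r}|lborel. F s) \<le> - Hbar * r + 2 * Mb + r * (\<epsilon> / 2)"
      using ch[OF kin] by blast
    have bound: "limsup_fine r (fb_avg_cost L (vv \<kappa>) y r) \<le> ereal (- Hbar + \<epsilon> / 2 + 2 * Mb / r)"
      if r: "r > 0" for r
    proof -
      have "(SUP P\<in>{P. is_partition r P \<and> fineness P < \<delta>'}. ereal (fb_avg_cost L (vv \<kappa>) y r P))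
          \<le> ereal (- Hbar + \<epsilon> / 2 + 2 * Mb / r)"
      proof (rule SUP_least)
        fix P assume "P \<in> {P. is_partition r P \<and> fineness P < \<delta>'}"
        then obtain n t where Pd: "P = (n, t)" "is_partition r (n, t)" "fineness (n, t) < \<delta>'"
          by (cases P) auto
        have "set_integrable lborel {0..r} (\<lambda>s. L (fb_x (vv \<kappa>) y P s) (fb_v (vv \<kappa>) y P s)) \<and>
          (LINT s:{0..r}|lborel. L (fb_x (vv \<kappa>) y P s) (fb_v (vv \<kappa>) y P s)) \<le> - Hbar * r + 2 * Mb + r * (\<epsilon> / 2)"
        proof -
          have Feq: "\<forall>i s. i < n \<longrightarrow> t i \<le> s \<longrightarrow> s < t (Suc i) \<longrightarrow>
            L (fb_x (vv \<kappa>) y (n, t) s) (fb_v (vv \<kappa>) y (n, t) s) =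
            L (fb_node (vv \<kappa>) y t i + (s - t i) *\<^sub>R vv \<kappa> (fb_node (vv \<kappa>) y t i)) (vv \<kappa> (fb_node (vv \<kappa>) y t i))"
          proof (intro allI impI)
            fix i s assume "i < n" "t i \<le> s" "s < t (Suc i)"
            note e = fb_eqs[OF Pd(2) this, of "vv \<kappa>" y]
            show "L (fb_x (vv \<kappa>) y (n, t) s) (fb_v (vv \<kappa>) y (n, t) s) =
            L (fb_node (vv \<kappa>) y t i + (s - t i) *\<^sub>R vv \<kappa> (fb_node (vv \<kappa>) y t i)) (vv \<kappa> (fb_node (vv \<kappa>) y t i))"
              by (simp only: e)
          qed
          show ?thesis using H[OF r Pd(2,3) Feq] unfolding Pd(1) .
        qed
        then have "fb_avg_cost L (vv \<kappa>) y r P \<le> (- Hbar * r + 2 * Mb + r * (\<epsilon> / 2)) / r"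
          unfolding fb_avg_cost_def using r by (intro divide_right_mono) auto
        also have "\<dots> = - Hbar + \<epsilon> / 2 + 2 * Mb / r" using r by (simp add: field_simps)
        finally show "ereal (fb_avg_cost L (vv \<kappa>) y r P) \<le> ereal (- Hbar + \<epsilon> / 2 + 2 * Mb / r)" by simp
      qed
      then show ?thesis unfolding limsup_fine_def by (intro INF_lower2[of \<delta>']) (use d' in auto)
    qed
    show "Limsup at_top (\<lambda>r. limsup_fine r (fb_avg_cost L (vv \<kappa>) y r)) \<le> ereal (- Hbar + \<epsilon>)"
    proof (rule Limsup_bounded)
      have "eventually (\<lambda>r. r \<ge> 4 * Mb / \<epsilon> + 1) at_top" by (rule eventually_ge_at_top)
      then show "eventually (\<lambda>r. limsup_fine r (fb_avg_cost L (vv \<kappa>) y r) \<le> ereal (- Hbar + \<epsilon>)) at_top"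
      proof eventually_elim
        case (elim r)
        have "4 * Mb / \<epsilon> \<ge> 0" using Mb(1) e by simp
        then have r: "r > 0" using elim by linarith
        have "4 * Mb / \<epsilon> \<le> r" using elim by simp
        then have "4 * Mb \<le> r * \<epsilon>" using e by (simp add: pos_divide_le_eq)
        then have "2 * Mb / r \<le> \<epsilon> / 2" using r by (simp add: field_simps)
        then have "ereal (- Hbar + \<epsilon> / 2 + 2 * Mb / r) \<le> ereal (- Hbar + \<epsilon>)" by simp
        then show ?case using bound[OF r] by (rule order_trans[rotated])
      qed
    qed
  qed
qed

end


lemma unif_partition:
  assumes r: "r > 0" and n: "n > 0"
  shows "is_partition r (n, \<lambda>i. r * real i / real n)" "fineness (n, \<lambda>i. r * real i / real n) = r / n"
proof -
  show "is_partition r (n, \<lambda>i. r * real i / real n)"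
    unfolding is_partition_def using r n by (auto simp: divide_strict_right_mono)
  have "(\<lambda>i. r * real (Suc i) / real n - r * real i / real n) ` {..<n} = {r / n}"
    using n by (auto simp: field_simps image_def intro!: bexI[of _ 0])
  then show "fineness (n, \<lambda>i. r * real i / real n) = r / n" unfolding fineness_def by simp
qed

lemma fb_node_sum:
  "fb_node V y t i = y + (\<Sum>j<i. (t (Suc j) - t j) *\<^sub>R V (fb_node V y t j))"
  by (induction i) auto

context fb_setting begin

lemma upper:
  assumes e: "\<epsilon> > 0"
  shows "eventually (\<lambda>r. avg_value L r y \<le> ereal (- Hbar + \<epsilon>)) at_top"
proof -
  obtain \<kappa>0 where k0: "\<kappa>0 > 0" and ch: "\<And>\<kappa>. \<kappa> \<in> {0<..\<kappa>0} \<Longrightarrow> \<exists>\<delta>'>0. \<forall>r y n t F. r > 0 \<longrightarrow> is_partition r (n, t) \<longrightarrow> fineness (n, t) < \<delta>' \<longrightarrow>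
     (\<forall>i s. i < n \<longrightarrow> t i \<le> s \<longrightarrow> s < t (Suc i) \<longrightarrow>
       F s = L (fb_node (vv \<kappa>) y t i + (s - t i) *\<^sub>R vv \<kappa> (fb_node (vv \<kappa>) y t i)) (vv \<kappa> (fb_node (vv \<kappa>) y t i))) \<longrightarrow>
     set_integrable lborel {0..r} F \<and> (LINT s:{0..r}|lborel. F s) \<le> - Hbar * r + 2 * Mb + r * (\<epsilon> / 2)"
    using fb_choice[OF e] by blast
  define \<kappa> where "\<kappa> = \<kappa>0"
  have k: "\<kappa> > 0" using k0 unfolding \<kappa>_def by simp
  obtain \<delta>' where d': "\<delta>' > 0" and H: "\<And>r y n t F. r > 0 \<Longrightarrow> is_partition r (n, t) \<Longrightarrow> fineness (n, t) < \<delta>' \<Longrightarrow>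
     (\<forall>i s. i < n \<longrightarrow> t i \<le> s \<longrightarrow> s < t (Suc i) \<longrightarrow>
       F s = L (fb_node (vv \<kappa>) y t i + (s - t i) *\<^sub>R vv \<kappa> (fb_node (vv \<kappa>) y t i)) (vv \<kappa> (fb_node (vv \<kappa>) y t i))) \<Longrightarrow>
     set_integrable lborel {0..r} F \<and> (LINT s:{0..r}|lborel. F s) \<le> - Hbar * r + 2 * Mb + r * (\<epsilon> / 2)"
  proof -
    have "\<kappa> \<in> {0<..\<kappa>0}" using k0 unfolding \<kappa>_def by simp
    from ch[OF this] show ?thesis using that by blast
  qed
  have main: "avg_value L r y \<le> ereal (- Hbar + \<epsilon> / 2 + 2 * Mb / r)" if r: "r > 0" for r
  proof -
    define n where "n = nat \<lceil>r / \<delta>'\<rceil> + 1"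
    have n: "n > 0" unfolding n_def by simp
    define t where "t i = r * real i / real n" for i
    note up = unif_partition[OF r n, folded t_def]
    have "r / \<delta>' < real n" unfolding n_def by linarith
    then have "r / real n < \<delta>'" using d' n by (simp add: field_simps)
    then have fin: "fineness (n, t) < \<delta>'" using up(2) by simp
    note P = up(1)
    note pp = part_props[OF P]
    define V where "V = vv \<kappa>"
    define nd where "nd i = fb_node V y t i" for i
    define v where "v = fb_v V y (n, t)"
    define x where "x s = y + (LINT u:{0..s}|lborel. v u)" for s
    have veq: "v s = V (nd i)" if "i < n" "t i \<le> s" "s < t (Suc i)" for i s
      unfolding v_def nd_def by (rule fb_eqs(1)[OF P that])
    have vint: "set_integrable lborel {t 0..t n} v \<and>
        (LINT s:{t 0..t n}|lborel. v s) = (\<Sum>i<n. integral {t i..t (Suc i)} (\<lambda>_. V (nd i)))"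
      by (rule piecewise_int) (use pp(4) veq in \<open>auto simp: less_imp_le\<close>)
    have xeq: "x s = nd i + (s - t i) *\<^sub>R V (nd i)" if i: "i < n" "t i \<le> s" "s < t (Suc i)" for i s
    proof -
      define t' where "t' j = (if j \<le> i then t j else s)" for j
      have "set_integrable lborel {t' 0..t' (Suc i)} v \<and>
        (LINT s:{t' 0..t' (Suc i)}|lborel. v s) = (\<Sum>j<Suc i. integral {t' j..t' (Suc j)} (\<lambda>_. V (nd j)))"
      proof (rule piecewise_int)
        fix j assume j: "j < Suc i"
        show "t' j \<le> t' (Suc j)"
          using j i pp(4)[of j] unfolding t'_def by (cases "j = i") auto
        show "continuous_on {t' j..t' (Suc j)} (\<lambda>_. V (nd j))" by simp
        fix s' assume "t' j \<le> s'" "s' < t' (Suc j)"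
        then show "v s' = V (nd j)"
          using j i unfolding t'_def
          by (cases "j = i") (auto intro!: veq part_mono[OF P] order.trans[OF _ part_mono[OF P, of "Suc j" i]] )
      qed
      then have "(LINT s:{0..s}|lborel. v s) = (\<Sum>j<Suc i. integral {t' j..t' (Suc j)} (\<lambda>_. V (nd j)))"
        unfolding t'_def using pp(2) by simp
      also have "\<dots> = (\<Sum>j<i. (t (Suc j) - t j) *\<^sub>R V (nd j)) + (s - t i) *\<^sub>R V (nd i)"
      proof -
        have "integral {t' j..t' (Suc j)} (\<lambda>_. V (nd j)) = (t (Suc j) - t j) *\<^sub>R V (nd j)" if "j < i" for j
          using that pp(4)[of j] i unfolding t'_def by (simp add: less_imp_le)
        moreover have "integral {t' i..t' (Suc i)} (\<lambda>_. V (nd i)) = (s - t i) *\<^sub>R V (nd i)"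
          using i unfolding t'_def by simp
        ultimately show ?thesis by (simp only: sum.lessThan_Suc) (metis (no_types, lifting) lessThan_iff sum.cong)
      qed
      finally show ?thesis unfolding x_def nd_def using fb_node_sum[of V y t i] by simp
    qed
    have xr: "x r = nd n"
    proof -
      have "(LINT s:{0..r}|lborel. v s) = (\<Sum>i<n. (t (Suc i) - t i) *\<^sub>R V (nd i))"
        using vint pp(2,3,4) by (simp add: less_imp_le)
      then show ?thesis unfolding x_def nd_def using fb_node_sum[of V y t n] by simp
    qed
    have cp: "controlled_process r y x v"
      unfolding controlled_process_def x_def using vint pp(2,3) by simp
    have Feq: "\<forall>i s. i < n \<longrightarrow> t i \<le> s \<longrightarrow> s < t (Suc i) \<longrightarrow>
       L (x s) (v s) = L (fb_node (vv \<kappa>) y t i + (s - t i) *\<^sub>R vv \<kappa> (fb_node (vv \<kappa>) y t i)) (vv \<kappa> (fb_node (vv \<kappa>) y t i))"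
      using xeq veq unfolding nd_def V_def by simp
    have hb: "set_integrable lborel {0..r} (\<lambda>s. L (x s) (v s)) \<and>
        (LINT s:{0..r}|lborel. L (x s) (v s)) \<le> - Hbar * r + 2 * Mb + r * (\<epsilon> / 2)"
      by (rule H[OF r P fin Feq])
    have "avg_value L r y \<le> cost L r x v / ereal r"
      unfolding avg_value_def using r cp
      by (intro ereal_divide_right_mono INF_lower2[of "(x, v)"]) auto
    also have "cost L r x v \<le> ereal (- Hbar * r + 2 * Mb + r * (\<epsilon> / 2))"
      unfolding cost_def using hb by simp
    then have "cost L r x v / ereal r \<le> ereal (- Hbar * r + 2 * Mb + r * (\<epsilon> / 2)) / ereal r"
      using r by (intro ereal_divide_right_mono) auto
    also have "\<dots> = ereal (- Hbar + \<epsilon> / 2 + 2 * Mb / r)" using r by (simp add: field_simps)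
    finally show ?thesis .
  qed
  have "eventually (\<lambda>r. r \<ge> 4 * Mb / \<epsilon> + 1) at_top" by (rule eventually_ge_at_top)
  then show ?thesis
  proof eventually_elim
    case (elim r)
    have "4 * Mb / \<epsilon> \<ge> 0" using Mb(1) e by simp
    then have r: "r > 0" using elim by linarith
    have "4 * Mb / \<epsilon> \<le> r" using elim by simp
    then have "4 * Mb \<le> r * \<epsilon>" using e by (simp add: pos_divide_le_eq)
    then have "2 * Mb / r \<le> \<epsilon> / 2" using r by (simp add: field_simps)
    then have "ereal (- Hbar + \<epsilon> / 2 + 2 * Mb / r) \<le> ereal (- Hbar + \<epsilon>)" by simp
    then show ?case using main[OF r] by (rule order_trans[rotated])
  qed
qed

end


lemma integral_partition_sum:
  fixes f :: "real \<Rightarrow> 'b::banach"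
  assumes mono: "\<And>i. i < n \<Longrightarrow> t i \<le> t (Suc i)" and fi: "f integrable_on {t 0..t n}"
  shows "integral {t 0..t n} f = (\<Sum>i<n. integral {t i..t (Suc i)} f)"
  using mono fi
proof (induction n)
  case 0 then show ?case by simp
next
  case (Suc n)
  have ab: "t 0 \<le> t n" using mono_steps[of "Suc n" t 0 n] Suc.prems(1) by simp
  have bc: "t n \<le> t (Suc n)" using Suc.prems(1) by simp
  have "f integrable_on {t 0..t n}"
    by (rule integrable_subinterval_real[OF Suc.prems(2)]) (use bc in auto)
  then have IH: "integral {t 0..t n} f = (\<Sum>i<n. integral {t i..t (Suc i)} f)"
    using Suc by simp
  show ?case
    using Henstock_Kurzweil_Integration.integral_combine[OF ab bc Suc.prems(2)] IH by simp
qed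

context setting begin

lemma lower_cost:
  assumes e: "\<epsilon> > 0" and r: "r > 0" and cp: "controlled_process r y x v"
  shows "ereal (- Hbar * r - 2 * Mb - r * (\<epsilon> / 2)) \<le> cost L r x v"
proof (cases "set_integrable lborel {0..r} (\<lambda>t. L (x t) (v t))")
  case False
  then show ?thesis unfolding cost_def by simp
next
  case si: True
  have sv: "set_integrable lborel {0..r} v" and xs: "\<And>s. s \<in> {0..r} \<Longrightarrow> x s = y + (LINT t:{0..s}|lborel. v t)"
    using cp unfolding controlled_process_def by auto
  have vint: "v integrable_on {0..r}" by (rule set_borel_integral_eq_integral(1)[OF sv])
  have xs': "x s = y + integral {0..s} v" if s: "s \<in> {0..r}" for s
  proof -
    have "set_integrable lborel {0..s} v" by (rule set_integrable_subset[OF sv]) (use s in auto)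
    then show ?thesis using xs[OF s] set_borel_integral_eq_integral(2) by metis
  qed
  have Lint: "(\<lambda>t. L (x t) (v t)) integrable_on {0..r}" by (rule set_borel_integral_eq_integral(1)[OF si])
  have Leq: "(LINT t:{0..r}|lborel. L (x t) (v t)) = integral {0..r} (\<lambda>t. L (x t) (v t))"
    by (rule set_borel_integral_eq_integral(2)[OF si])
  have nint: "(\<lambda>t. norm (v t)) integrable_on {0..r}"
    by (rule set_borel_integral_eq_integral(1)[OF set_integrable_norm[OF sv]])
  define A where "A = integral {0..r} (\<lambda>t. norm (v t))"
  have A0: "A \<ge> 0" unfolding A_def by (rule integral_nonneg[OF nint]) simp
  have xcont: "continuous_on {0..r} x"
  proof -
    have "continuous_on {0..r} (\<lambda>s. y + integral {0..s} v)"
      by (intro continuous_intros indefinite_integral_continuous_1[OF vint])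
    then show ?thesis by (rule continuous_on_eq) (use xs' in auto)
  qed
  define \<eta> where "\<eta> = \<epsilon> / 4"
  have \<eta>: "\<eta> > 0" using e unfolding \<eta>_def by simp
  obtain \<delta> where \<delta>: "\<delta> > 0" and near: "\<And>z z' p. dist z z' < \<delta> \<Longrightarrow> norm p \<le> 2 * lipc \<Longrightarrow>
     (\<forall>u. - (p \<bullet> u) - L z' u \<le> Hbar) \<Longrightarrow> (\<forall>u. L z u \<ge> - Hbar - p \<bullet> u - \<eta>)"
    using L_lower_near[OF \<eta>] by blast
  define \<kappa> where "\<kappa> = sqrt (\<delta> / (4 * lipc))"
  have k: "\<kappa> > 0" unfolding \<kappa>_def using \<delta> lipc(1) by simp
  have kk: "\<kappa>\<^sup>2 = \<delta> / (4 * lipc)" unfolding \<kappa>_def using \<delta> lipc(1) by simp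
  have kd: "2 * lipc * \<kappa>\<^sup>2 = \<delta> / 2" unfolding kk using lipc(1) by simp
  define \<theta> where "\<theta> = min (\<delta> / 2) (\<epsilon> * r * \<kappa>\<^sup>2 / (2 * (A + 1)))"
  have \<theta>: "\<theta> > 0" unfolding \<theta>_def using \<delta> e r k A0 by simp
  have "uniformly_continuous_on {0..r} x" by (rule compact_uniformly_continuous[OF xcont compact_Icc])
  then obtain \<theta>0 where \<theta>0: "\<theta>0 > 0" and uc: "\<And>s s'. s \<in> {0..r} \<Longrightarrow> s' \<in> {0..r} \<Longrightarrow> dist s' s < \<theta>0 \<Longrightarrow> dist (x s') (x s) < \<theta>"
    unfolding uniformly_continuous_on_def using \<theta> by metis
  define n where "n = nat \<lceil>r / \<theta>0\<rceil> + 1"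
  have n: "n > 0" unfolding n_def by simp
  define t where "t i = r * real i / real n" for i
  note up = unif_partition[OF r n, folded t_def]
  note P = up(1)
  note pp = part_props[OF P]
  have "r / \<theta>0 < real n" unfolding n_def by linarith
  then have rn: "r / real n < \<theta>0" using \<theta>0 n by (simp add: field_simps)
  have tin: "t i \<in> {0..r}" if "i \<le> n" for i
    using part_mono[OF P, of 0 i] part_mono[OF P, of i n] that pp by auto
  have tau: "t (Suc i) - t i = r / real n" for i unfolding t_def by (simp add: add_divide_distrib[symmetric] algebra_simps)
  define \<beta> where "\<beta> z = (SOME b. \<forall>u. \<phi> (z + u) - (norm u)\<^sup>2 / (2 * \<kappa>\<^sup>2) \<le> \<phi> (z + b) - (norm b)\<^sup>2 / (2 * \<kappa>\<^sup>2))" for z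
  have \<beta>: "\<phi> (z + u) - (norm u)\<^sup>2 / (2 * \<kappa>\<^sup>2) \<le> \<phi> (z + \<beta> z) - (norm (\<beta> z))\<^sup>2 / (2 * \<kappa>\<^sup>2)" for z u
    using someI_ex[OF supconv_exists[OF k, of z]] unfolding \<beta>_def by blast
  define G where "G z = \<phi> (z + \<beta> z) - (norm (\<beta> z))\<^sup>2 / (2 * \<kappa>\<^sup>2)" for z
  have Gb: "\<bar>G z\<bar> \<le> Mb" for z
  proof -
    have "G z \<ge> \<phi> z" using \<beta>[of z 0] unfolding G_def by simp
    moreover have "G z \<le> \<phi> (z + \<beta> z)" unfolding G_def using k by simp
    ultimately show ?thesis using Mb(2)[of z] Mb(2)[of "z + \<beta> z"] by linarith
  qed
  define X where "X i = x (t i)" for i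
  define D where "D i = X (Suc i) - X i" for i
  define p where "p i = (1 / \<kappa>\<^sup>2) *\<^sub>R \<beta> (X i)" for i
  define NV where "NV i = integral {t i..t (Suc i)} (\<lambda>t. norm (v t))" for i
  have piece: "integral {t i..t (Suc i)} (\<lambda>t. L (x t) (v t)) \<ge>
      (- Hbar - \<eta>) * (r / real n) + G (X i) - G (X (Suc i)) - \<theta> * NV i / (2 * \<kappa>\<^sup>2)"
    if i: "i < n" for i
  proof -
    have ti: "t i \<in> {0..r}" "t (Suc i) \<in> {0..r}" using tin i by auto
    have tle: "t i \<le> t (Suc i)" using pp(4)[OF i] by simp
    have sub: "{t i..t (Suc i)} \<subseteq> {0..r}" using ti by auto
    have vi: "v integrable_on {t i..t (Suc i)}" by (rule integrable_subinterval_real[OF vint sub])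
    have Li: "(\<lambda>t. L (x t) (v t)) integrable_on {t i..t (Suc i)}" by (rule integrable_subinterval_real[OF Lint sub])
    have ni: "(\<lambda>t. norm (v t)) integrable_on {t i..t (Suc i)}" by (rule integrable_subinterval_real[OF nint sub])
    have Dint: "D i = integral {t i..t (Suc i)} v"
    proof -
      have "v integrable_on {0..t (Suc i)}" by (rule integrable_subinterval_real[OF vint]) (use ti in auto)
      from Henstock_Kurzweil_Integration.integral_combine[of 0 "t i" "t (Suc i)", OF _ tle this]
      have "integral {0..t i} v + integral {t i..t (Suc i)} v = integral {0..t (Suc i)} v" using ti by simp
      then show ?thesis unfolding D_def X_def using xs'[OF ti(1)] xs'[OF ti(2)] by (simp add: algebra_simps)
    qed
    have Dn: "norm (D i) \<le> NV i"
      unfolding Dint NV_def by (rule Henstock_Kurzweil_Integration.integral_norm_bound_integral[OF vi ni]) simp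
    have Dt: "norm (D i) < \<theta>"
    proof -
      have "dist (x (t (Suc i))) (x (t i)) < \<theta>" using uc[OF ti(1) ti(2)] tau[of i] rn r by (simp add: dist_real_def)
      then show ?thesis unfolding D_def X_def by (simp add: dist_norm)
    qed
    have D2: "(norm (D i))\<^sup>2 \<le> \<theta> * NV i"
    proof -
      have "(norm (D i))\<^sup>2 = norm (D i) * norm (D i)" by (simp add: power2_eq_square)
      also have "\<dots> \<le> \<theta> * NV i" using Dt Dn \<theta> by (intro mult_mono) auto
      finally show ?thesis .
    qed
    have bsmall: "norm (\<beta> (X i)) \<le> 2 * lipc * \<kappa>\<^sup>2" by (rule supconv_props(1)[OF k \<beta>])
    have pn: "norm (p i) \<le> 2 * lipc" unfolding p_def using bsmall k by (simp add: field_simps)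
    have Hp: "\<forall>u. - (p i \<bullet> u) - L (X i + \<beta> (X i)) u \<le> Hbar"
      unfolding p_def using supconv_props(2)[OF k \<beta>] by blast
    have lowL: "L (x s) (v s) \<ge> (- Hbar - \<eta>) - p i \<bullet> v s" if s: "s \<in> {t i..t (Suc i)}" for s
    proof -
      have s0: "s \<in> {0..r}" using s sub by auto
      have "dist s (t i) < \<theta>0" using s tau[of i] rn by (simp add: dist_real_def)
      then have "dist (x s) (X i) < \<theta>" unfolding X_def using uc[OF ti(1) s0] by simp
      then have "dist (x s) (X i + \<beta> (X i)) < \<theta> + 2 * lipc * \<kappa>\<^sup>2"
        using bsmall dist_triangle[of "x s" "X i + \<beta> (X i)" "X i"] by (simp add: dist_norm)
      also have "\<dots> \<le> \<delta>" using kd unfolding \<theta>_def by simp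
      finally have "\<forall>u. L (x s) u \<ge> - Hbar - p i \<bullet> u - \<eta>" by (rule near[OF _ pn Hp])
      then have "- Hbar - p i \<bullet> v s - \<eta> \<le> L (x s) (v s)" by blast
      then show ?thesis by linarith
    qed
    have "integral {t i..t (Suc i)} (\<lambda>s. (- Hbar - \<eta>) - p i \<bullet> v s) \<le> integral {t i..t (Suc i)} (\<lambda>t. L (x t) (v t))"
    proof (rule integral_le[OF _ Li lowL])
      have "((\<lambda>z. p i \<bullet> z) \<circ> v) integrable_on {t i..t (Suc i)}"
        by (rule integrable_linear[OF vi]) (rule bounded_linear_inner_right)
      then show "(\<lambda>s. (- Hbar - \<eta>) - p i \<bullet> v s) integrable_on {t i..t (Suc i)}"
        by (intro integrable_diff) (auto simp: o_def)
    qed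
    also have "integral {t i..t (Suc i)} (\<lambda>s. (- Hbar - \<eta>) - p i \<bullet> v s) = (- Hbar - \<eta>) * (r / real n) - p i \<bullet> D i"
    proof -
      have "((\<lambda>z. p i \<bullet> z) \<circ> v) integrable_on {t i..t (Suc i)}"
        by (rule integrable_linear[OF vi]) (rule bounded_linear_inner_right)
      then have "integral {t i..t (Suc i)} (\<lambda>s. (- Hbar - \<eta>) - p i \<bullet> v s)
          = integral {t i..t (Suc i)} (\<lambda>s. (- Hbar - \<eta>)) - integral {t i..t (Suc i)} ((\<lambda>z. p i \<bullet> z) \<circ> v)"
        by (subst integral_diff[symmetric]) (auto simp: o_def)
      also have "integral {t i..t (Suc i)} ((\<lambda>z. p i \<bullet> z) \<circ> v) = p i \<bullet> D i"
        unfolding Dint by (rule integral_linear[OF vi bounded_linear_inner_right])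
      finally show ?thesis using tle tau[of i] by simp
    qed
    finally have 1: "(- Hbar - \<eta>) * (r / real n) - p i \<bullet> D i \<le> integral {t i..t (Suc i)} (\<lambda>t. L (x t) (v t))" .
    have 2: "G (X (Suc i)) \<ge> G (X i) + p i \<bullet> D i - (norm (D i))\<^sup>2 / (2 * \<kappa>\<^sup>2)"
    proof -
      have "\<phi> (X (Suc i) + (\<beta> (X i) - D i)) - (norm (\<beta> (X i) - D i))\<^sup>2 / (2 * \<kappa>\<^sup>2) \<le> G (X (Suc i))"
        unfolding G_def by (rule \<beta>)
      moreover have "X (Suc i) + (\<beta> (X i) - D i) = X i + \<beta> (X i)" unfolding D_def by simp
      moreover have "(norm (\<beta> (X i) - D i))\<^sup>2 = (norm (\<beta> (X i)))\<^sup>2 - 2 * (\<beta> (X i) \<bullet> D i) + (norm (D i))\<^sup>2"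
        using norm_add_sq[of "\<beta> (X i)" "- D i"] by simp
      moreover have "((norm (\<beta> (X i)))\<^sup>2 - 2 * (\<beta> (X i) \<bullet> D i) + (norm (D i))\<^sup>2) / (2 * \<kappa>\<^sup>2)
          = (norm (\<beta> (X i)))\<^sup>2 / (2 * \<kappa>\<^sup>2) - p i \<bullet> D i + (norm (D i))\<^sup>2 / (2 * \<kappa>\<^sup>2)"
        unfolding p_def using k by (simp add: field_simps)
      ultimately show ?thesis unfolding G_def by simp
    qed
    have 3: "(norm (D i))\<^sup>2 / (2 * \<kappa>\<^sup>2) \<le> \<theta> * NV i / (2 * \<kappa>\<^sup>2)"
      using D2 k by (intro divide_right_mono) auto
    show ?thesis using 1 2 3 by linarith
  qed
  have "integral {0..r} (\<lambda>t. L (x t) (v t)) = (\<Sum>i<n. integral {t i..t (Suc i)} (\<lambda>t. L (x t) (v t)))"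
    using integral_partition_sum[of n t "\<lambda>t. L (x t) (v t)"] pp Lint by (simp add: less_imp_le)
  also have "\<dots> \<ge> (\<Sum>i<n. (- Hbar - \<eta>) * (r / real n) + (G (X i) - G (X (Suc i))) - \<theta> * NV i / (2 * \<kappa>\<^sup>2))"
    by (rule sum_mono) (use piece in \<open>fastforce\<close>)
  also have "(\<Sum>i<n. (- Hbar - \<eta>) * (r / real n) + (G (X i) - G (X (Suc i))) - \<theta> * NV i / (2 * \<kappa>\<^sup>2))
      = (\<Sum>i<n. (- Hbar - \<eta>) * (r / real n)) + (\<Sum>i<n. G (X i) - G (X (Suc i))) - (\<Sum>i<n. \<theta> * NV i / (2 * \<kappa>\<^sup>2))"
    by (simp only: sum.distrib sum_subtractf)
  also have "(\<Sum>i<n. (- Hbar - \<eta>) * (r / real n)) = (- Hbar - \<eta>) * r" using n by simp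
  also have "(\<Sum>i<n. G (X i) - G (X (Suc i))) = G (X 0) - G (X n)" by (rule sum_lessThan_telescope')
  also have "(\<Sum>i<n. \<theta> * NV i / (2 * \<kappa>\<^sup>2)) = \<theta> * (\<Sum>i<n. NV i) / (2 * \<kappa>\<^sup>2)"
    by (simp add: sum_distrib_left sum_divide_distrib)
  also have "(\<Sum>i<n. NV i) = A"
    unfolding NV_def A_def using integral_partition_sum[of n t "\<lambda>t. norm (v t)"] pp nint by (simp add: less_imp_le)
  finally have tot: "integral {0..r} (\<lambda>t. L (x t) (v t)) \<ge> (- Hbar - \<eta>) * r + (G (X 0) - G (X n)) - \<theta> * A / (2 * \<kappa>\<^sup>2)" .
  have "G (X 0) - G (X n) \<ge> - 2 * Mb" using Gb[of "X 0"] Gb[of "X n"] by linarith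
  moreover have "\<theta> * A / (2 * \<kappa>\<^sup>2) \<le> r * (\<epsilon> / 4)"
  proof -
    have "\<theta> * A \<le> (\<epsilon> * r * \<kappa>\<^sup>2 / (2 * (A + 1))) * A" unfolding \<theta>_def using A0 by (intro mult_right_mono) auto
    also have "\<dots> \<le> (\<epsilon> * r * \<kappa>\<^sup>2 / 2)"
    proof -
      have "A / (A + 1) \<le> 1" using A0 by simp
      then have "(\<epsilon> * r * \<kappa>\<^sup>2 / 2) * (A / (A + 1)) \<le> (\<epsilon> * r * \<kappa>\<^sup>2 / 2) * 1"
        using e r k by (intro mult_left_mono) auto
      then show ?thesis by (simp add: field_simps)
    qed
    finally have "\<theta> * A \<le> \<epsilon> * r * \<kappa>\<^sup>2 / 2" .
    then have "\<theta> * A / (2 * \<kappa>\<^sup>2) \<le> (\<epsilon> * r * \<kappa>\<^sup>2 / 2) / (2 * \<kappa>\<^sup>2)" using k by (intro divide_right_mono) auto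
    also have "\<dots> = r * (\<epsilon> / 4)" using k by (simp add: field_simps)
    finally show ?thesis .
  qed
  ultimately have "integral {0..r} (\<lambda>t. L (x t) (v t)) \<ge> - Hbar * r - 2 * Mb - r * (\<epsilon> / 2)"
  proof -
    have "(- Hbar - \<eta>) * r = - Hbar * r - r * (\<epsilon> / 4)" unfolding \<eta>_def by (simp add: algebra_simps)
    then show ?thesis using tot \<open>G (X 0) - G (X n) \<ge> - 2 * Mb\<close> \<open>\<theta> * A / (2 * \<kappa>\<^sup>2) \<le> r * (\<epsilon> / 4)\<close> by linarith
  qed
  then show ?thesis unfolding cost_def using si Leq by simp
qed

lemma lower:
  assumes e: "\<epsilon> > 0"
  shows "eventually (\<lambda>r. ereal (- Hbar - \<epsilon>) \<le> avg_value L r y) at_top"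
proof -
  have main: "ereal (- Hbar - \<epsilon> / 2 - 2 * Mb / r) \<le> avg_value L r y" if r: "r > 0" for r
  proof -
    have "ereal (- Hbar * r - 2 * Mb - r * (\<epsilon> / 2)) \<le> (INF xv\<in>{(x, v). controlled_process r y x v}. cost L r (fst xv) (snd xv))"
      by (rule INF_greatest) (use lower_cost[OF e r] in auto)
    then have "ereal (- Hbar * r - 2 * Mb - r * (\<epsilon> / 2)) / ereal r \<le> avg_value L r y"
      unfolding avg_value_def using r by (intro ereal_divide_right_mono) auto
    moreover have "ereal (- Hbar * r - 2 * Mb - r * (\<epsilon> / 2)) / ereal r = ereal (- Hbar - \<epsilon> / 2 - 2 * Mb / r)"
      using r by (simp add: field_simps)
    ultimately show ?thesis by simp
  qed
  have "eventually (\<lambda>r. r \<ge> 4 * Mb / \<epsilon> + 1) at_top" by (rule eventually_ge_at_top)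
  then show ?thesis
  proof eventually_elim
    case (elim r)
    have "4 * Mb / \<epsilon> \<ge> 0" using Mb(1) e by simp
    then have r: "r > 0" using elim by linarith
    have "4 * Mb / \<epsilon> \<le> r" using elim by simp
    then have "4 * Mb \<le> r * \<epsilon>" using e by (simp add: pos_divide_le_eq)
    then have "2 * Mb / r \<le> \<epsilon> / 2" using r by (simp add: field_simps)
    then have "ereal (- Hbar - \<epsilon>) \<le> ereal (- Hbar - \<epsilon> / 2 - 2 * Mb / r)" by simp
    then show ?case using main[OF r] by (rule order_trans)
  qed
qed

end


lemma ereal_squeeze_tendsto:
  fixes f :: "real \<Rightarrow> ereal"
  assumes lo: "\<And>\<epsilon>. \<epsilon> > 0 \<Longrightarrow> eventually (\<lambda>r. ereal (c - \<epsilon>) \<le> f r) F"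
    and hi: "\<And>\<epsilon>. \<epsilon> > 0 \<Longrightarrow> eventually (\<lambda>r. f r \<le> ereal (c + \<epsilon>)) F"
  shows "(f \<longlongrightarrow> ereal c) F"
proof (rule order_tendstoI)
  fix a assume a: "a < ereal c"
  obtain \<epsilon> where \<epsilon>: "\<epsilon> > 0" "a < ereal (c - \<epsilon>)"
  proof (cases a)
    case (real a')
    then show ?thesis using a by (intro that[of "(c - a') / 2"]) (auto simp: field_simps)
  next
    case MInf
    then show ?thesis using that[of 1] by simp
  next
    case PInf
    then show ?thesis using a by simp
  qed
  show "eventually (\<lambda>r. a < f r) F"
    using lo[OF \<epsilon>(1)] by eventually_elim (use \<epsilon>(2) in \<open>rule less_le_trans\<close>)
next
  fix a assume a: "a > ereal c"
  obtain \<epsilon> where \<epsilon>: "\<epsilon> > 0" "ereal (c + \<epsilon>) < a"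
  proof (cases a)
    case (real a')
    then show ?thesis using a by (intro that[of "(a' - c) / 2"]) (auto simp: field_simps)
  next
    case PInf
    then show ?thesis using that[of 1] by simp
  next
    case MInf
    then show ?thesis using a by simp
  qed
  show "eventually (\<lambda>r. f r < a) F"
    using hi[OF \<epsilon>(1)] by eventually_elim (erule le_less_trans[OF _ \<epsilon>(2)])
qed

theorem corollary3:
  fixes L :: "'a::euclidean_space \<Rightarrow> 'a \<Rightarrow> real"
    and \<phi> :: "'a \<Rightarrow> real" and Hbar :: real
    and b :: "real \<Rightarrow> 'a \<Rightarrow> 'a" and vv :: "real \<Rightarrow> 'a \<Rightarrow> 'a"
  assumes contL: "continuous_on UNIV (\<lambda>(x, v). L x v)"
    and perL: "\<And>v. periodic_fun (\<lambda>x. L x v)"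
    and superlin: "filterlim (\<lambda>v. INF x. L x v / norm v) at_top at_infinity"
    and visc: "viscosity_solution L \<phi> Hbar"
    and b_min: "\<And>\<kappa> x u. \<kappa> > 0 \<Longrightarrow>
       \<phi> (x + b \<kappa> x) + (norm (b \<kappa> x))\<^sup>2 / (2 * \<kappa>\<^sup>2) \<le> \<phi> (x + u) + (norm u)\<^sup>2 / (2 * \<kappa>\<^sup>2)"
    and vv_max: "\<And>\<kappa> x u. \<kappa> > 0 \<Longrightarrow>
       (let p = (1 / \<kappa>\<^sup>2) *\<^sub>R (- b \<kappa> x) in
          - (p \<bullet> u) - L (x + b \<kappa> x) u \<le> - (p \<bullet> vv \<kappa> x) - L (x + b \<kappa> x) (vv \<kappa> x))"
  shows "(\<forall>y. ((\<lambda>r. avg_value L r y) \<longlongrightarrow> ereal (- Hbar)) at_top) \<and>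
         (\<forall>\<epsilon>>0. \<exists>\<kappa>0>0. \<forall>\<kappa>\<in>{0<..\<kappa>0}. \<forall>y.
            Limsup at_top (\<lambda>r. limsup_fine r (fb_avg_cost L (vv \<kappa>) y r)) \<le> ereal (- Hbar + \<epsilon>))"
proof -
  interpret fb_setting L \<phi> Hbar b vv
  proof (rule fb_setting.intro)
    show "setting L \<phi> Hbar" by (rule setting.intro) (fact contL perL superlin visc)+
    show "fb_setting_axioms L \<phi> b vv" by (rule fb_setting_axioms.intro) (fact b_min vv_max)+
  qed
  have 1: "\<forall>y. ((\<lambda>r. avg_value L r y) \<longlongrightarrow> ereal (- Hbar)) at_top"
  proof
    fix y
    show "((\<lambda>r. avg_value L r y) \<longlongrightarrow> ereal (- Hbar)) at_top"
    proof (rule ereal_squeeze_tendsto)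
      fix \<epsilon> :: real assume "\<epsilon> > 0"
      show "eventually (\<lambda>r. ereal (- Hbar - \<epsilon>) \<le> avg_value L r y) at_top" by (rule lower[OF \<open>\<epsilon> > 0\<close>])
      show "eventually (\<lambda>r. avg_value L r y \<le> ereal (- Hbar + \<epsilon>)) at_top" by (rule upper[OF \<open>\<epsilon> > 0\<close>])
    qed
  qed
  show ?thesis using 1 part2 by blast
qed


end
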